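(* Let $d\ge1$ and let $\tau$ be a type of degree $d$. Then (1) $a^{-1}(\tau,(d^1))=0$ if $\tau$ is mixed; (2) if $\tau=(b_1^m\cdots b_r^m)$ is $m$-pure with $r$ parts, then $$a^{-1}(\tau,(d^1))=\frac{\mu(m)}{m}\cdot\frac{(-1)^{r-1}}{r}\cdot\frac{r!}{\tau[(1,m)]!\,\tau[(2,m)]!\cdots\tau[(d/m,m)]!}.$$
   Context: A type of degree $d$ is a finite multiset $\tau$ of pairs $(b,m)$ of positive integers with $\sum bm=d$; the pair $(b,m)$ is written $b^m$, $\tau[(b,m)]$ denotes the number of occurrences of $(b,m)$ in $\tau$, and the number of pairs counted with multiplicity is the length of $\tau$. $\tau$ is $m$-pure if every pair in it has second entry $m$, and mixed if it is not $m$-pure for any $m$. For types $\tau=\{(b_1,m_1),\dots,(b_r,m_r)\}$ and $\lambda=\{(c_1,n_1),\dots,(c_s,n_s)\}$ listed in some order, an arrangement of $\tau$ into $\lambda$ is an $r\times s$ matrix $A$ with non-negative integer entries such that $A\vec n=\vec m$ and $A^T\vec b=\vec c$; $a(\tau,\lambda)$ is the number of arrangements (independent of the chosen orderings). The square matrix $(a(\tau,\lambda))_{\tau,\lambda}$ indexed by types of degree $d$ is invertible over $\mathbb Q$, and $a^{-1}(\tau,\lambda)$ denotes the entries of its inverse. $(d^1)$ is the type $\{(d,1)\}$, and $\mu$ is the classical Möbius function. *)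

theory Defs
  imports Complex_Main "HOL-Library.Multiset" "HOL-Library.Product_Lexorder"
    "HOL-Computational_Algebra.Primes" "HOL-Computational_Algebra.Squarefree"
begin

type_synonym ptype = "(nat \<times> nat) multiset"

definition is_type :: "nat \<Rightarrow> ptype \<Rightarrow> bool" where
  "is_type d \<tau> \<longleftrightarrow> (\<forall>p \<in># \<tau>. 0 < fst p \<and> 0 < snd p) \<and>
                    (\<Sum>p \<in># \<tau>. fst p * snd p) = d"

definition types_of_degree :: "nat \<Rightarrow> ptype set" where
  "types_of_degree d = {\<tau>. is_type d \<tau>}"

definition is_pure :: "nat \<Rightarrow> ptype \<Rightarrow> bool" where
  "is_pure m \<tau> \<longleftrightarrow> (\<forall>p \<in># \<tau>. snd p = m)"

definition is_mixed :: "ptype \<Rightarrow> bool" where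
  "is_mixed \<tau> \<longleftrightarrow> (\<forall>m. \<not> is_pure m \<tau>)"

text \<open>Arrangements of \<tau> into \<sigma>, w.r.t. a fixed listing of both types
  (here: the sorted listing). Matrices are functions nat => nat => nat vanishing
  outside the index range r x s.\<close>
definition arrangements :: "ptype \<Rightarrow> ptype \<Rightarrow> (nat \<Rightarrow> nat \<Rightarrow> nat) set" where
  "arrangements \<tau> \<sigma> =
     (let ts = sorted_list_of_multiset \<tau>; ls = sorted_list_of_multiset \<sigma>;
          r = length ts; s = length ls in
      {A. (\<forall>i j. (i \<ge> r \<or> j \<ge> s) \<longrightarrow> A i j = 0) \<and>
          (\<forall>i<r. (\<Sum>j<s. A i j * snd (ls ! j)) = snd (ts ! i)) \<and>
          (\<forall>j<s. (\<Sum>i<r. A i j * fst (ts ! i)) = fst (ls ! j))})"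

definition arr_count :: "ptype \<Rightarrow> ptype \<Rightarrow> nat" where
  "arr_count \<tau> \<sigma> = card (arrangements \<tau> \<sigma>)"

text \<open>Entries of the inverse of the matrix (a(\<tau>,\<sigma>)) indexed by the types of degree d,
  over the rationals (the matrix is invertible, so this is well defined).\<close>
definition arr_inv :: "nat \<Rightarrow> ptype \<Rightarrow> ptype \<Rightarrow> rat" where
  "arr_inv d = (THE g.
      (\<forall>\<tau> \<in> types_of_degree d. \<forall>\<sigma> \<in> types_of_degree d.
         (\<Sum>\<nu> \<in> types_of_degree d. of_nat (arr_count \<tau> \<nu>) * g \<nu> \<sigma>)
           = (if \<tau> = \<sigma> then 1 else 0)) \<and>
      (\<forall>\<tau> \<sigma>. (\<tau> \<notin> types_of_degree d \<or> \<sigma> \<notin> types_of_degree d) \<longrightarrow> g \<tau> \<sigma> = 0))"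

definition mobius_mu :: "nat \<Rightarrow> int" where
  "mobius_mu n = (if n = 0 then 0 else if squarefree n then (-1) ^ card (prime_factors n) else 0)"

end

theory Submission
  imports Defs "HOL-Combinatorics.Multiset_Permutations" "HOL-Combinatorics.List_Permutation"
begin


definition box :: "(nat \<Rightarrow> nat) \<Rightarrow> (nat \<Rightarrow> nat) set" where
  "box u = {w. \<forall>i. w i \<le> u i}"

definition vec :: "nat \<Rightarrow> (nat \<Rightarrow> nat) \<Rightarrow> bool" where
  "vec r u \<longleftrightarrow> (\<forall>i\<ge>r. u i = 0)"

definition Cm :: "nat \<Rightarrow> nat \<Rightarrow> (nat \<Rightarrow> nat) \<Rightarrow> (nat \<Rightarrow> nat \<Rightarrow> nat) set" where
  "Cm r s u = {A. (\<forall>i j. (i \<ge> r \<or> j \<ge> s) \<longrightarrow> A i j = 0) \<and>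
      (\<forall>i<r. (\<Sum>j<s. A i j) = u i) \<and> (\<forall>j<s. \<exists>i<r. A i j \<noteq> 0)}"

definition Nm :: "nat \<Rightarrow> nat \<Rightarrow> (nat \<Rightarrow> nat) \<Rightarrow> nat" where
  "Nm r s u = card (Cm r s u)"

lemma finite_box:
  assumes "vec r u" shows "finite (box u)"
proof -
  let ?B = "\<Sum>i<r. u i"
  have "box u \<subseteq> {w. \<forall>x. (x \<in> {..<r} \<longrightarrow> w x \<in> {0..?B}) \<and> (x \<notin> {..<r} \<longrightarrow> w x = 0)}"
  proof
    fix w assume w: "w \<in> box u"
    have "\<forall>x. (x \<in> {..<r} \<longrightarrow> w x \<in> {0..?B}) \<and> (x \<notin> {..<r} \<longrightarrow> w x = 0)"
    proof (intro allI conjI impI)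
      fix x assume "x \<in> {..<r}"
      then have "u x \<le> ?B" by (intro member_le_sum) auto
      then show "w x \<in> {0..?B}" using w by (auto simp: box_def intro: le_trans)
    next
      fix x assume "x \<notin> {..<r}"
      then show "w x = 0" using w assms by (simp add: box_def vec_def) (metis le_zero_eq not_le)
    qed
    then show "w \<in> {w. \<forall>x. (x \<in> {..<r} \<longrightarrow> w x \<in> {0..?B}) \<and> (x \<notin> {..<r} \<longrightarrow> w x = 0)}" by blast
  qed
  moreover have "finite {w. \<forall>x. (x \<in> {..<r} \<longrightarrow> w x \<in> {0..?B}) \<and> (x \<notin> {..<r} \<longrightarrow> (w x::nat) = 0)}"
    by (rule finite_set_of_finite_funs) auto
  ultimately show ?thesis by (rule finite_subset)
qed

lemma box_vec: "vec r u \<Longrightarrow> w \<in> box u \<Longrightarrow> vec r w"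
  by (auto simp: box_def vec_def) (metis le_zero_eq)

lemma finite_Cm: "finite (Cm r s u)"
proof -
  let ?B = "Max (u ` {..<r})"
  let ?R = "{w. \<forall>x. (x \<in> {..<s} \<longrightarrow> w x \<in> {0..?B}) \<and> (x \<notin> {..<s} \<longrightarrow> (w x::nat) = 0)}"
  have fR: "finite ?R" by (rule finite_set_of_finite_funs) auto
  have "Cm r s u \<subseteq> {A. \<forall>x. (x \<in> {..<r} \<longrightarrow> A x \<in> ?R) \<and> (x \<notin> {..<r} \<longrightarrow> A x = (\<lambda>_. 0))}"
  proof
    fix A assume A: "A \<in> Cm r s u"
    have "\<forall>x. (x \<in> {..<r} \<longrightarrow> A x \<in> ?R) \<and> (x \<notin> {..<r} \<longrightarrow> A x = (\<lambda>_. 0))"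
    proof (intro allI conjI impI)
      fix x assume x: "x \<in> {..<r}"
      have "\<forall>y. (y \<in> {..<s} \<longrightarrow> A x y \<in> {0..?B}) \<and> (y \<notin> {..<s} \<longrightarrow> A x y = 0)"
      proof (intro allI conjI impI)
        fix y assume y: "y \<in> {..<s}"
        have "A x y \<le> (\<Sum>j<s. A x j)" using y by (intro member_le_sum) auto
        also have "\<dots> = u x" using A x by (auto simp: Cm_def)
        also have "\<dots> \<le> ?B" using x by (intro Max_ge) auto
        finally show "A x y \<in> {0..?B}" by simp
      next
        fix y assume "y \<notin> {..<s}" then show "A x y = 0" using A by (auto simp: Cm_def)
      qed
      then show "A x \<in> ?R" by blast
    next
      fix x assume "x \<notin> {..<r}" then show "A x = (\<lambda>_. 0)" using A by (auto simp: Cm_def)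
    qed
    then show "A \<in> {A. \<forall>x. (x \<in> {..<r} \<longrightarrow> A x \<in> ?R) \<and> (x \<notin> {..<r} \<longrightarrow> A x = (\<lambda>_. 0))}" by blast
  qed
  moreover have "finite {A. \<forall>x. (x \<in> {..<r} \<longrightarrow> A x \<in> ?R) \<and> (x \<notin> {..<r} \<longrightarrow> A x = (\<lambda>_. 0))}"
    by (rule finite_set_of_finite_funs) (use fR in auto)
  ultimately show ?thesis by (rule finite_subset)
qed

lemma Nm_0: "Nm r 0 u = (if \<forall>i<r. u i = 0 then 1 else 0)"
proof -
  have "Cm r 0 u = (if \<forall>i<r. u i = 0 then {\<lambda>_ _. 0} else {})"
    by (auto simp: Cm_def fun_eq_iff)
  then show ?thesis by (simp add: Nm_def)
qed

lemma Nm_big: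
  assumes "s > (\<Sum>i<r. u i)" shows "Nm r s u = 0"
proof -
  have "Cm r s u = {}"
  proof (rule ccontr)
    assume "Cm r s u \<noteq> {}"
    then obtain A where A: "A \<in> Cm r s u" by blast
    have "(\<Sum>i<r. u i) = (\<Sum>i<r. \<Sum>j<s. A i j)" using A by (auto simp: Cm_def)
    also have "\<dots> = (\<Sum>j<s. \<Sum>i<r. A i j)" by (rule sum.swap)
    also have "\<dots> \<ge> (\<Sum>j<s. 1)"
    proof (rule sum_mono)
      fix j assume "j \<in> {..<s}"
      then obtain i where "i < r" "A i j \<noteq> 0" using A by (auto simp: Cm_def)
      then have "A i j \<le> (\<Sum>i<r. A i j)" by (intro member_le_sum) auto
      then show "1 \<le> (\<Sum>i<r. A i j)" using \<open>A i j \<noteq> 0\<close> by linarith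
    qed
    finally show False using assms by simp
  qed
  then show ?thesis by (simp add: Nm_def)
qed


definition colsplit :: "(nat \<Rightarrow> nat \<Rightarrow> nat) \<Rightarrow> (nat \<Rightarrow> nat) \<times> (nat \<Rightarrow> nat \<Rightarrow> nat)" where
  "colsplit A = ((\<lambda>i. A i 0), (\<lambda>i j. A i (Suc j)))"

definition coljoin :: "(nat \<Rightarrow> nat) \<times> (nat \<Rightarrow> nat \<Rightarrow> nat) \<Rightarrow> (nat \<Rightarrow> nat \<Rightarrow> nat)" where
  "coljoin p = (\<lambda>i j. if j = 0 then fst p i else snd p i (j - 1))"

lemma colsplit_bij:
  assumes u: "vec r u"
  shows "bij_betw colsplit (Cm r (Suc s) u) (SIGMA v:box u - {\<lambda>_. 0}. Cm r s (\<lambda>i. u i - v i))"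
proof (rule bij_betw_byWitness[where f' = coljoin])
  show "\<forall>A\<in>Cm r (Suc s) u. coljoin (colsplit A) = A"
    by (auto simp: coljoin_def colsplit_def fun_eq_iff)
  show "\<forall>p\<in>(SIGMA v:box u - {\<lambda>_. 0}. Cm r s (\<lambda>i. u i - v i)). colsplit (coljoin p) = p"
    by (auto simp: coljoin_def colsplit_def fun_eq_iff)
  show "colsplit ` Cm r (Suc s) u \<subseteq> (SIGMA v:box u - {\<lambda>_. 0}. Cm r s (\<lambda>i. u i - v i))"
  proof
    fix p assume "p \<in> colsplit ` Cm r (Suc s) u"
    then obtain A where A: "A \<in> Cm r (Suc s) u" and p: "p = colsplit A" by blast
    have z: "\<And>i j. (i \<ge> r \<or> j \<ge> Suc s) \<Longrightarrow> A i j = 0" using A by (auto simp: Cm_def)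
    have rs: "A i 0 + (\<Sum>j<s. A i (Suc j)) = u i" if "i < r" for i
    proof -
      have "(\<Sum>j<Suc s. A i j) = u i" using A that unfolding Cm_def by blast
      then show ?thesis by (simp only: sum.lessThan_Suc_shift)
    qed
    have cs: "\<And>j. j < Suc s \<Longrightarrow> \<exists>i<r. A i j \<noteq> 0" using A by (auto simp: Cm_def)
    have vb: "(\<lambda>i. A i 0) \<in> box u"
      unfolding box_def
    proof (intro CollectI allI)
      fix i show "A i 0 \<le> u i"
      proof (cases "i < r")
        case True then show ?thesis using rs[OF True] by linarith
      next
        case False then show ?thesis using z[of i 0] by simp
      qed
    qed
    have vnz: "(\<lambda>i. A i 0) \<noteq> (\<lambda>_. 0)" using cs[of 0] by (auto simp: fun_eq_iff)
    have "(\<lambda>i j. A i (Suc j)) \<in> Cm r s (\<lambda>i. u i - A i 0)"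
      unfolding Cm_def
    proof (intro CollectI conjI allI impI)
      fix i j assume "r \<le> i \<or> s \<le> j" then show "A i (Suc j) = 0" using z by auto
    next
      fix i assume "i < r" then show "(\<Sum>j<s. A i (Suc j)) = u i - A i 0" using rs[of i] by linarith
    next
      fix j assume "j < s" then show "\<exists>i<r. A i (Suc j) \<noteq> 0" using cs[of "Suc j"] by simp
    qed
    then show "p \<in> (SIGMA v:box u - {\<lambda>_. 0}. Cm r s (\<lambda>i. u i - v i))"
      using vb vnz p by (auto simp: colsplit_def)
  qed
  show "coljoin ` (SIGMA v:box u - {\<lambda>_. 0}. Cm r s (\<lambda>i. u i - v i)) \<subseteq> Cm r (Suc s) u"
  proof
    fix A assume "A \<in> coljoin ` (SIGMA v:box u - {\<lambda>_. 0}. Cm r s (\<lambda>i. u i - v i))"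
    then obtain v B where v: "v \<in> box u" "v \<noteq> (\<lambda>_. 0)" and B: "B \<in> Cm r s (\<lambda>i. u i - v i)"
      and A: "A = coljoin (v, B)" by blast
    have vv: "vec r v" using box_vec[OF u v(1)] .
    have "\<forall>i j. (i \<ge> r \<or> j \<ge> Suc s) \<longrightarrow> A i j = 0"
      using B vv by (auto simp: A coljoin_def Cm_def vec_def)
    moreover have "\<forall>i<r. (\<Sum>j<Suc s. A i j) = u i"
    proof (intro allI impI)
      fix i assume i: "i < r"
      have "(\<Sum>j<Suc s. A i j) = v i + (\<Sum>j<s. B i j)"
        unfolding sum.lessThan_Suc_shift by (simp add: A coljoin_def)
      also have "\<dots> = v i + (u i - v i)" using B i by (auto simp: Cm_def)
      also have "\<dots> = u i" using v(1) by (auto simp: box_def)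
      finally show "(\<Sum>j<Suc s. A i j) = u i" .
    qed
    moreover have "\<forall>j<Suc s. \<exists>i<r. A i j \<noteq> 0"
    proof (intro allI impI)
      fix j assume j: "j < Suc s"
      show "\<exists>i<r. A i j \<noteq> 0"
      proof (cases j)
        case 0
        then obtain i where "v i \<noteq> 0" using v(2) by (auto simp: fun_eq_iff)
        then have "i < r" using vv unfolding vec_def by (meson not_le)
        then show ?thesis using \<open>v i \<noteq> 0\<close> 0 by (auto simp: A coljoin_def)
      next
        case (Suc j')
        then show ?thesis using B j by (auto simp: A coljoin_def Cm_def)
      qed
    qed
    ultimately show "A \<in> Cm r (Suc s) u" by (simp add: Cm_def)
  qed
qed

lemma Cm_Suc_sum:
  fixes h :: "(nat \<Rightarrow> nat) \<Rightarrow> 'a::comm_semiring_1"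
  assumes u: "vec r u"
  shows "(\<Sum>A\<in>Cm r (Suc s) u. h (\<lambda>i. A i 0)) = (\<Sum>v\<in>box u - {\<lambda>_. 0}. h v * of_nat (Nm r s (\<lambda>i. u i - v i)))"
proof -
  have "(\<Sum>A\<in>Cm r (Suc s) u. h (\<lambda>i. A i 0)) = (\<Sum>A\<in>Cm r (Suc s) u. h (fst (colsplit A)))"
    by (simp add: colsplit_def)
  also have "\<dots> = (\<Sum>p\<in>(SIGMA v:box u - {\<lambda>_. 0}. Cm r s (\<lambda>i. u i - v i)). h (fst p))"
    by (rule sum.reindex_bij_betw[OF colsplit_bij[OF u], of "\<lambda>p. h (fst p)"])
  also have "\<dots> = (\<Sum>(v,B)\<in>(SIGMA v:box u - {\<lambda>_. 0}. Cm r s (\<lambda>i. u i - v i)). h v)"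
    by (simp add: split_def)
  also have "\<dots> = (\<Sum>v\<in>box u - {\<lambda>_. 0}. \<Sum>B\<in>Cm r s (\<lambda>i. u i - v i). h v)"
    by (rule sum.Sigma[symmetric]) (use finite_box[OF u] finite_Cm in auto)
  also have "\<dots> = (\<Sum>v\<in>box u - {\<lambda>_. 0}. h v * of_nat (Nm r s (\<lambda>i. u i - v i)))"
    by (simp add: Nm_def mult.commute)
  finally show ?thesis .
qed

lemma Nm_Suc:
  assumes u: "vec r u"
  shows "Nm r (Suc s) u = (\<Sum>v\<in>box u - {\<lambda>_. 0}. Nm r s (\<lambda>i. u i - v i))"
  using Cm_Suc_sum[OF u, where h="\<lambda>_. 1::nat" and s=s] by (simp add: Nm_def)


definition sw :: "nat \<Rightarrow> nat \<Rightarrow> nat" where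
  "sw j x = (if x = 0 then j else if x = j then 0 else x)"

lemma sw_sw[simp]: "sw j (sw j x) = x"
  by (simp add: sw_def)

lemma sw_bij: "j < s \<Longrightarrow> bij_betw (sw j) {..<s} {..<s}"
  by (rule bij_betw_byWitness[where f'="sw j"]) (auto simp: sw_def)

lemma Cm_sw:
  assumes j: "j < s" and A: "A \<in> Cm r s u"
  shows "(\<lambda>i x. A i (sw j x)) \<in> Cm r s u"
  unfolding Cm_def
proof (intro CollectI conjI allI impI)
  fix i x assume "r \<le> i \<or> s \<le> x"
  then show "A i (sw j x) = 0" using A j by (auto simp: Cm_def sw_def)
next
  fix i assume i: "i < r"
  have "(\<Sum>x<s. A i (sw j x)) = (\<Sum>x<s. A i x)"
    by (rule sum.reindex_bij_betw[OF sw_bij[OF j]])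
  then show "(\<Sum>x<s. A i (sw j x)) = u i" using A i by (auto simp: Cm_def)
next
  fix x assume "x < s"
  then have "sw j x < s" using j by (auto simp: sw_def)
  then show "\<exists>i<r. A i (sw j x) \<noteq> 0" using A by (auto simp: Cm_def)
qed

lemma Cm_col_sym:
  assumes j: "j < s"
  shows "(\<Sum>A\<in>Cm r s u. A 0 j) = (\<Sum>A\<in>Cm r s u. A 0 0)"
proof -
  have b: "bij_betw (\<lambda>A i x. A i (sw j x)) (Cm r s u) (Cm r s u)"
    by (rule bij_betw_byWitness[where f'="\<lambda>A i x. A i (sw j x)"]) (auto simp: Cm_sw[OF j])
  have "(\<Sum>A\<in>Cm r s u. A 0 0) = (\<Sum>A\<in>Cm r s u. (\<lambda>i x. A i (sw j x)) 0 0)"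
    by (rule sum.reindex_bij_betw[OF b, symmetric])
  then show ?thesis by (simp add: sw_def)
qed

lemma Cm_weight:
  assumes r: "0 < r"
  shows "s * (\<Sum>A\<in>Cm r s u. A 0 0) = u 0 * Nm r s u"
proof -
  have "s * (\<Sum>A\<in>Cm r s u. A 0 0) = (\<Sum>j<s. \<Sum>A\<in>Cm r s u. A 0 j)"
  proof -
    have "(\<Sum>j<s. \<Sum>A\<in>Cm r s u. A 0 j) = (\<Sum>j<s. \<Sum>A\<in>Cm r s u. A 0 0)"
      by (rule sum.cong[OF refl], rule Cm_col_sym) simp
    then show ?thesis by simp
  qed
  also have "\<dots> = (\<Sum>A\<in>Cm r s u. \<Sum>j<s. A 0 j)" by (rule sum.swap)
  also have "\<dots> = (\<Sum>A\<in>Cm r s u. u 0)" using r by (intro sum.cong) (auto simp: Cm_def)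
  also have "\<dots> = u 0 * Nm r s u" by (simp add: Nm_def)
  finally show ?thesis .
qed

definition vsum :: "nat \<Rightarrow> (nat \<Rightarrow> nat) \<Rightarrow> nat" where
  "vsum r u = (\<Sum>i<r. u i)"

definition Mf :: "nat \<Rightarrow> nat \<Rightarrow> (nat \<Rightarrow> nat) \<Rightarrow> int" where
  "Mf r D u = (\<Sum>t\<le>D. (-1)^t * int (Nm r t u))"

lemma vsum_less:
  assumes u: "vec r u" and v: "v \<in> box u" "v \<noteq> (\<lambda>_. 0)"
  shows "vsum r (\<lambda>i. u i - v i) < vsum r u"
proof -
  obtain i where i: "v i \<noteq> 0" using v(2) by (auto simp: fun_eq_iff)
  have vv: "vec r v" using box_vec[OF u v(1)] .
  then have ir: "i < r" using i unfolding vec_def by (meson not_le)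
  show ?thesis unfolding vsum_def
  proof (rule sum_strict_mono_ex1)
    show "\<forall>x\<in>{..<r}. u x - v x \<le> u x" by auto
    have "v i \<le> u i" using v(1) by (simp add: box_def)
    then show "\<exists>a\<in>{..<r}. u a - v a < u a" using ir i by (intro bexI[of _ i]) auto
  qed simp
qed

lemma box_flip:
  "bij_betw (\<lambda>w i. u i - w i) (box u) (box u)"
  by (rule bij_betw_byWitness[where f'="\<lambda>w i. u i - w i"]) (auto simp: box_def fun_eq_iff)

lemma zero_in_box: "(\<lambda>_. 0) \<in> box u" by (simp add: box_def)

lemma Mf_box:
  assumes u: "vec r u" and D: "vsum r u \<le> D"
  shows "(\<Sum>w\<in>box u. Mf r D w) = (if \<forall>i<r. u i = 0 then 1 else 0)"
proof -
  let ?B = "box u - {\<lambda>_. 0}"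
  have fB: "finite (box u)" using finite_box[OF u] .
  have "(\<Sum>w\<in>box u. Mf r D w) = (\<Sum>v\<in>box u. Mf r D (\<lambda>i. u i - v i))"
    by (rule sum.reindex_bij_betw[OF box_flip, symmetric])
  also have "\<dots> = Mf r D u + (\<Sum>v\<in>?B. Mf r D (\<lambda>i. u i - v i))"
    using sum.remove[OF fB zero_in_box, of "\<lambda>v. Mf r D (\<lambda>i. u i - v i)"] by simp
  also have "(\<Sum>v\<in>?B. Mf r D (\<lambda>i. u i - v i))
      = (\<Sum>v\<in>?B. \<Sum>t<D. (-1)^t * int (Nm r t (\<lambda>i. u i - v i)))"
  proof (rule sum.cong[OF refl])
    fix v assume v: "v \<in> ?B"
    have "vsum r (\<lambda>i. u i - v i) < vsum r u" using vsum_less[OF u] v by blast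
    then have "Nm r D (\<lambda>i. u i - v i) = 0"
      using D by (intro Nm_big) (simp add: vsum_def)
    then show "Mf r D (\<lambda>i. u i - v i) = (\<Sum>t<D. (-1)^t * int (Nm r t (\<lambda>i. u i - v i)))"
      unfolding Mf_def by (simp add: lessThan_Suc_atMost[symmetric])
  qed
  also have "Mf r D u = int (Nm r 0 u) + (\<Sum>t<D. (-1)^(Suc t) * int (Nm r (Suc t) u))"
    unfolding Mf_def by (subst sum.atMost_shift) simp
  also have "(\<Sum>t<D. (-1)^(Suc t) * int (Nm r (Suc t) u))
      = - (\<Sum>t<D. \<Sum>v\<in>?B. (-1)^t * int (Nm r t (\<lambda>i. u i - v i)))"
  proof -
    have "(-1)^(Suc t) * int (Nm r (Suc t) u) = - (\<Sum>v\<in>?B. (-1)^t * int (Nm r t (\<lambda>i. u i - v i)))" for t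
      by (simp only: Nm_Suc[OF u] of_nat_sum sum_distrib_left[symmetric] power_Suc)
    then show ?thesis by (simp only: sum_negf)
  qed
  also have "(\<Sum>t<D. \<Sum>v\<in>?B. (-1)^t * int (Nm r t (\<lambda>i. u i - v i)))
      = (\<Sum>v\<in>?B. \<Sum>t<D. (-1)^t * int (Nm r t (\<lambda>i. u i - v i)))"
    by (rule sum.swap)
  finally show ?thesis by (simp add: Nm_0)
qed


lemma Mf_lt:
  assumes u: "vec r u" and D: "vsum r u \<le> D" and v: "v \<in> box u - {\<lambda>_. 0}"
  shows "Mf r D (\<lambda>i. u i - v i) = (\<Sum>t<D. (-1)^t * int (Nm r t (\<lambda>i. u i - v i)))"
proof -
  have "vsum r (\<lambda>i. u i - v i) < vsum r u" using vsum_less[OF u] v by blast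
  then have "Nm r D (\<lambda>i. u i - v i) = 0"
    using D by (intro Nm_big) (simp add: vsum_def)
  then show ?thesis
    unfolding Mf_def by (simp add: lessThan_Suc_atMost[symmetric])
qed

lemma L_int:
  assumes r: "0 < r" and k: "vec r k" and pos: "\<forall>i<r. k i \<ge> 1" and D: "vsum r k \<le> D"
  shows "(\<Sum>t<D. (-1)^t * (\<Sum>A\<in>Cm r (Suc t) k. int (A 0 0))) = (if r = 1 then 1 else 0)"
proof -
  let ?B = "box k - {\<lambda>_. 0}"
  have fB: "finite (box k)" using finite_box[OF k] .
  have "(\<Sum>t<D. (-1)^t * (\<Sum>A\<in>Cm r (Suc t) k. int (A 0 0)))
      = (\<Sum>t<D. (-1)^t * (\<Sum>v\<in>?B. int (v 0) * int (Nm r t (\<lambda>i. k i - v i))))"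
    using Cm_Suc_sum[OF k, where h="\<lambda>v. int (v 0)"] by simp
  also have "\<dots> = (\<Sum>t<D. \<Sum>v\<in>?B. int (v 0) * ((-1)^t * int (Nm r t (\<lambda>i. k i - v i))))"
    by (simp add: sum_distrib_left algebra_simps)
  also have "\<dots> = (\<Sum>v\<in>?B. \<Sum>t<D. int (v 0) * ((-1)^t * int (Nm r t (\<lambda>i. k i - v i))))"
    by (rule sum.swap)
  also have "\<dots> = (\<Sum>v\<in>?B. int (v 0) * Mf r D (\<lambda>i. k i - v i))"
    by (rule sum.cong[OF refl]) (simp add: Mf_lt[OF k D] sum_distrib_left)
  also have "\<dots> = (\<Sum>v\<in>box k. int (v 0) * Mf r D (\<lambda>i. k i - v i))"
    using sum.remove[OF fB zero_in_box, of "\<lambda>v. int (v 0) * Mf r D (\<lambda>i. k i - v i)"] by simp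
  also have "\<dots> = (\<Sum>w\<in>box k. int (k 0 - w 0) * Mf r D w)"
  proof -
    have "(\<Sum>w\<in>box k. int (k 0 - w 0) * Mf r D w)
        = (\<Sum>v\<in>box k. int (k 0 - (k 0 - v 0)) * Mf r D (\<lambda>i. k i - v i))"
      by (rule sum.reindex_bij_betw[OF box_flip, symmetric])
    also have "\<dots> = (\<Sum>v\<in>box k. int (v 0) * Mf r D (\<lambda>i. k i - v i))"
      by (rule sum.cong[OF refl]) (auto simp: box_def)
    finally show ?thesis by simp
  qed
  also have "\<dots> = (\<Sum>w\<in>box k. \<Sum>x\<in>{1..k 0}. if w 0 < x then Mf r D w else 0)"
  proof (rule sum.cong[OF refl])
    fix w assume w: "w \<in> box k"
    have "(\<Sum>x\<in>{1..k 0}. if w 0 < x then Mf r D w else 0) = (\<Sum>x\<in>{x\<in>{1..k 0}. w 0 < x}. Mf r D w)"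
      by (rule sum.inter_filter[symmetric]) simp
    also have "{x\<in>{1..k 0}. w 0 < x} = {Suc (w 0)..k 0}" by auto
    finally show "int (k 0 - w 0) * Mf r D w = (\<Sum>x\<in>{1..k 0}. if w 0 < x then Mf r D w else 0)"
      by simp
  qed
  also have "\<dots> = (\<Sum>x\<in>{1..k 0}. \<Sum>w\<in>box k. if w 0 < x then Mf r D w else 0)"
    by (rule sum.swap)
  also have "\<dots> = (\<Sum>x\<in>{1..k 0}. if \<forall>i<r. (k(0 := x - 1)) i = 0 then 1 else 0)"
  proof (rule sum.cong[OF refl])
    fix x assume x: "x \<in> {1..k 0}"
    let ?k = "k(0 := x - 1)"
    have kv: "vec r ?k" using k r by (auto simp: vec_def)
    have kD: "vsum r ?k \<le> D"
    proof -
      have "vsum r ?k \<le> vsum r k" unfolding vsum_def using x by (intro sum_mono) auto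
      then show ?thesis using D by simp
    qed
    have bx: "box ?k = {w\<in>box k. w 0 < x}"
      using x by (auto simp: box_def)
    have "(\<Sum>w\<in>box k. if w 0 < x then Mf r D w else 0) = (\<Sum>w\<in>{w\<in>box k. w 0 < x}. Mf r D w)"
      by (rule sum.inter_filter[symmetric, OF fB])
    also have "\<dots> = (\<Sum>w\<in>box ?k. Mf r D w)" by (subst bx) (rule refl)
    also have "\<dots> = (if \<forall>i<r. ?k i = 0 then 1 else 0)" by (rule Mf_box[OF kv kD])
    finally show "(\<Sum>w\<in>box k. if w 0 < x then Mf r D w else 0) = (if \<forall>i<r. ?k i = 0 then 1 else 0)" .
  qed
  also have "\<dots> = (if r = 1 then 1 else 0)"
  proof (cases "r = 1")
    case True
    have "(\<Sum>x\<in>{1..k 0}. if \<forall>i<r. (k(0 := x - 1)) i = 0 then 1 else 0)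
        = (\<Sum>x\<in>{1..k 0}. if x = 1 then 1 else (0::int))"
      using True by (intro sum.cong) auto
    also have "\<dots> = 1" using pos r by (simp add: sum.delta)
    finally show ?thesis using True by simp
  next
    case False
    then have "1 < r" using r by simp
    then have "k 1 \<noteq> 0" using pos by auto
    then have "(\<Sum>x\<in>{1..k 0}. if \<forall>i<r. (k(0 := x - 1)) i = 0 then 1 else 0) = (0::int)"
      using \<open>1 < r\<close> by (intro sum.neutral) auto
    then show ?thesis using False by simp
  qed
  finally show ?thesis .
qed

lemma rat_aux: "(a::rat) * w = kk * n \<Longrightarrow> a \<noteq> 0 \<Longrightarrow> kk \<noteq> 0 \<Longrightarrow> c / a * n = c / kk * w"
proof -
  assume h: "a * w = kk * n" "a \<noteq> 0" "kk \<noteq> 0"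
  then have "n = a * w / kk" by (simp add: field_simps)
  then show ?thesis using h by (simp add: field_simps)
qed

lemma L_rat:
  assumes r: "0 < r" and k: "vec r k" and pos: "\<forall>i<r. k i \<ge> 1" and D: "vsum r k \<le> D"
  shows "(\<Sum>s\<in>{1..D}. ((-1)^(s-1) / of_nat s) * of_nat (Nm r s k) :: rat) = (if r = 1 then 1 / of_nat (k 0) else 0)"
proof -
  have k0: "k 0 \<ge> 1" using pos r by auto
  have "(\<Sum>s\<in>{1..D}. ((-1)^(s-1) / of_nat s) * of_nat (Nm r s k) :: rat)
      = (\<Sum>t<D. ((-1)^t / of_nat (Suc t)) * of_nat (Nm r (Suc t) k))"
    unfolding image_Suc_lessThan[symmetric] by (subst sum.reindex) auto
  also have "\<dots> = (\<Sum>t<D. ((-1)^t / of_nat (k 0)) * of_int (\<Sum>A\<in>Cm r (Suc t) k. int (A 0 0)))"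
  proof (rule sum.cong[OF refl])
    fix t
    define W where "W = (\<Sum>A\<in>Cm r (Suc t) k. A 0 0)"
    have w: "Suc t * W = k 0 * Nm r (Suc t) k" using Cm_weight[OF r, of "Suc t" k] by (simp add: W_def)
    have w': "(of_nat (Suc t) :: rat) * of_nat W = of_nat (k 0) * of_nat (Nm r (Suc t) k)"
      using arg_cong[OF w, of "of_nat :: nat \<Rightarrow> rat"] by (simp only: of_nat_mult)
    have e: "(of_int (\<Sum>A\<in>Cm r (Suc t) k. int (A 0 0)) :: rat) = of_nat W"
      by (simp add: W_def)
    show "((-1)^t / of_nat (Suc t)) * of_nat (Nm r (Suc t) k) = ((-1)^t / of_nat (k 0)) * (of_int (\<Sum>A\<in>Cm r (Suc t) k. int (A 0 0)) :: rat)"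
      unfolding e by (rule rat_aux[OF w']) (use k0 in auto)
  qed
  also have "\<dots> = (1 / of_nat (k 0)) * of_int (\<Sum>t<D. (-1)^t * (\<Sum>A\<in>Cm r (Suc t) k. int (A 0 0)))"
    by (simp add: sum_distrib_left)
  also have "\<dots> = (if r = 1 then 1 / of_nat (k 0) else 0)"
    by (simp add: L_int[OF r k pos D])
  finally show ?thesis .
qed


lemma mu_mult_prime:
  assumes p: "prime p" and n: "n > 0" and nd: "\<not> p dvd n"
  shows "mobius_mu (p * n) = - mobius_mu n"
proof -
  have cop: "coprime p n" using p nd by (simp add: prime_imp_coprime)
  have sq: "squarefree (p * n) \<longleftrightarrow> squarefree n"
  proof
    assume "squarefree (p * n)" then show "squarefree n" by (rule squarefree_mono[rotated]) simp
  next
    assume "squarefree n" then show "squarefree (p * n)"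
      using squarefree_mult_coprime[OF cop] squarefree_prime[OF p] by blast
  qed
  have pf: "prime_factors (p * n) = insert p (prime_factors n)"
    using prime_factors_product[of p n] p n prime_prime_factors[OF p] by (auto simp: prime_gt_0_nat)
  have pn: "p \<notin> prime_factors n" using nd by auto
  have "p * n \<noteq> 0" using p n by (auto simp: prime_gt_0_nat)
  then show ?thesis using n sq pn by (simp add: mobius_mu_def pf)
qed

lemma mu_mult_prime_dvd:
  assumes p: "prime p" and nd: "p dvd n"
  shows "mobius_mu (p * n) = 0"
proof -
  have "\<not> squarefree (p * n)"
  proof (rule not_squarefreeI[of p])
    show "p ^ 2 dvd p * n" using nd by (simp add: power2_eq_square)
    show "\<not> p dvd 1" using prime_gt_1_nat[OF p] by simp
  qed
  then show ?thesis by (simp add: mobius_mu_def)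
qed

lemma mobius_sum:
  assumes m: "m > 0"
  shows "(\<Sum>n | n dvd m. mobius_mu n) = (if m = 1 then 1 else 0)"
proof (cases "m = 1")
  case True
  then show ?thesis by (simp add: mobius_mu_def)
next
  case False
  then obtain p where p: "prime p" "p dvd m" using m prime_factor_nat by blast
  then obtain q where q: "m = p * q" by blast
  have q0: "q > 0" using q m by auto
  let ?S1 = "{n. n dvd m \<and> \<not> p dvd n}"
  let ?S2 = "{n. n dvd m \<and> p dvd n}"
  have fin: "finite {n. n dvd m}" using m by simp
  have split: "{n. n dvd m} = ?S1 \<union> ?S2" by auto
  have "(\<Sum>n | n dvd m. mobius_mu n) = (\<Sum>n\<in>?S1. mobius_mu n) + (\<Sum>n\<in>?S2. mobius_mu n)"
    by (subst split, rule sum.union_disjoint) (use fin in auto)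
  also have "?S2 = (\<lambda>n. p * n) ` {n. n dvd q}"
  proof safe
    fix n assume "n dvd m" "p dvd n"
    then obtain k where k: "n = p * k" by blast
    then have "k dvd q" using \<open>n dvd m\<close> q p(1) by (auto simp: prime_gt_0_nat)
    then show "n \<in> (\<lambda>n. p * n) ` {n. n dvd q}" using k by blast
  next
    fix k assume "k dvd q" then show "p * k dvd m" using q by simp
  qed simp
  also have "(\<Sum>n\<in>(\<lambda>n. p * n) ` {n. n dvd q}. mobius_mu n) = (\<Sum>k | k dvd q. mobius_mu (p * k))"
    by (subst sum.reindex) (use p(1) in \<open>auto simp: inj_on_def prime_gt_0_nat\<close>)
  also have "\<dots> = (\<Sum>k\<in>{k. k dvd q \<and> \<not> p dvd k}. mobius_mu (p * k))"
    using q0 by (intro sum.mono_neutral_right) (auto simp: mu_mult_prime_dvd[OF p(1)])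
  also have "{k. k dvd q \<and> \<not> p dvd k} = ?S1"
  proof safe
    fix k assume "k dvd q" then show "k dvd m" using q by simp
  next
    fix k assume k: "k dvd m" "\<not> p dvd k"
    have "coprime k p" using prime_imp_coprime[OF p(1) k(2)] by (simp add: ac_simps)
    then show "k dvd q" using k(1) q by (metis coprime_dvd_mult_right_iff)
  qed
  also have "(\<Sum>k\<in>?S1. mobius_mu (p * k)) = (\<Sum>k\<in>?S1. - mobius_mu k)"
    using m by (intro sum.cong[OF refl] mu_mult_prime[OF p(1)]) (auto intro: Nat.gr0I)
  finally show ?thesis using False by (simp add: sum_negf)
qed


lemma sum_mset_list_nth:
  "(\<Sum>p\<in>#mset xs. f p) = (\<Sum>i<length xs. f (xs ! i))"
proof -
  have "(\<Sum>p\<in>#mset xs. f p) = sum_list (map f xs)"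
    by (simp flip: sum_mset_sum_list)
  also have "\<dots> = (\<Sum>i = 0..<length xs. map f xs ! i)" by (subst sum_list_sum_nth) simp
  also have "\<dots> = (\<Sum>i<length xs. f (xs ! i))" by (simp add: atLeast0LessThan)
  finally show ?thesis .
qed

definition arrL :: "(nat \<times> nat) list \<Rightarrow> (nat \<times> nat) list \<Rightarrow> (nat \<Rightarrow> nat \<Rightarrow> nat) set" where
  "arrL ts ls = {A. (\<forall>i j. (i \<ge> length ts \<or> j \<ge> length ls) \<longrightarrow> A i j = 0) \<and>
          (\<forall>i<length ts. (\<Sum>j<length ls. A i j * snd (ls ! j)) = snd (ts ! i)) \<and>
          (\<forall>j<length ls. (\<Sum>i<length ts. A i j * fst (ts ! i)) = fst (ls ! j))}"

lemma arrangements_arrL: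
  "arrangements \<tau> \<sigma> = arrL (sorted_list_of_multiset \<tau>) (sorted_list_of_multiset \<sigma>)"
  by (simp add: arrangements_def arrL_def Let_def)

lemma arrL_map:
  assumes f: "bij_betw f {..<s} {..<s}" and l: "length ls = s" "length ls' = s"
    and e: "\<forall>j<s. ls ! j = ls' ! (f j)" and B: "B \<in> arrL ts ls'"
  shows "(\<lambda>i j. if j < s then B i (f j) else 0) \<in> arrL ts ls"
  unfolding arrL_def
proof (intro CollectI conjI allI impI)
  fix i j assume "length ts \<le> i \<or> length ls \<le> j"
  then show "(if j < s then B i (f j) else 0) = 0" using B l by (auto simp: arrL_def)
next
  fix i assume i: "i < length ts"
  have "(\<Sum>j<length ls. (if j < s then B i (f j) else 0) * snd (ls ! j))
      = (\<Sum>j<s. B i (f j) * snd (ls' ! (f j)))" using l e by (intro sum.cong) auto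
  also have "\<dots> = (\<Sum>j<s. B i j * snd (ls' ! j))"
    by (rule sum.reindex_bij_betw[OF f, of "\<lambda>j. B i j * snd (ls' ! j)"])
  also have "\<dots> = snd (ts ! i)" using B i l by (auto simp: arrL_def)
  finally show "(\<Sum>j<length ls. (if j < s then B i (f j) else 0) * snd (ls ! j)) = snd (ts ! i)" .
next
  fix j assume j: "j < length ls"
  then have fj: "f j < s" using f l by (auto dest: bij_betwE)
  have "(\<Sum>i<length ts. (if j < s then B i (f j) else 0) * fst (ts ! i))
      = (\<Sum>i<length ts. B i (f j) * fst (ts ! i))" using j l by simp
  also have "\<dots> = fst (ls' ! (f j))" using B fj l by (auto simp: arrL_def)
  also have "\<dots> = fst (ls ! j)" using e j l by simp
  finally show "(\<Sum>i<length ts. (if j < s then B i (f j) else 0) * fst (ts ! i)) = fst (ls ! j)" .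
qed

lemma arrL_perm:
  assumes m: "mset ls = mset ls'"
  shows "card (arrL ts ls) = card (arrL ts ls')"
proof -
  define s where "s = length ls"
  have l: "length ls = s" "length ls' = s" using m s_def by (auto dest: mset_eq_length)
  obtain f where f: "bij_betw f {..<s} {..<s}" and e: "\<forall>j<s. ls ! j = ls' ! (f j)"
    using permutation_Ex_bij[OF m] l by auto
  define g where "g = the_inv_into {..<s} f"
  have g: "bij_betw g {..<s} {..<s}" unfolding g_def by (rule bij_betw_the_inv_into[OF f])
  have fg: "\<And>j. j < s \<Longrightarrow> f (g j) = j" unfolding g_def
    using f by (simp add: f_the_inv_into_f_bij_betw)
  have gf: "\<And>j. j < s \<Longrightarrow> g (f j) = j" unfolding g_def
    using f by (simp add: bij_betw_def the_inv_into_f_f)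
  have gs: "\<And>j. j < s \<Longrightarrow> g j < s" using g by (auto dest: bij_betwE)
  have fs: "\<And>j. j < s \<Longrightarrow> f j < s" using f by (auto dest: bij_betwE)
  have e': "\<forall>j<s. ls' ! j = ls ! (g j)" using e fg gs by metis
  show ?thesis
  proof (rule bij_betw_same_card[of "\<lambda>A i j. if j < s then A i (g j) else 0"],
         rule bij_betw_byWitness[where f'="\<lambda>B i j. if j < s then B i (f j) else 0"])
    show "\<forall>A\<in>arrL ts ls. (\<lambda>i j. if j < s then (if f j < s then A i (g (f j)) else 0) else 0) = A"
      using gf fs l by (auto simp: arrL_def fun_eq_iff)
    show "\<forall>B\<in>arrL ts ls'. (\<lambda>i j. if j < s then (if g j < s then B i (f (g j)) else 0) else 0) = B"
      using fg gs l by (auto simp: arrL_def fun_eq_iff)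
    show "(\<lambda>A i j. if j < s then A i (g j) else 0) ` arrL ts ls \<subseteq> arrL ts ls'"
      using arrL_map[OF g l(2) l(1) e'] by auto
    show "(\<lambda>B i j. if j < s then B i (f j) else 0) ` arrL ts ls' \<subseteq> arrL ts ls"
      using arrL_map[OF f l e] by auto
  qed
qed


definition Kset :: "nat \<Rightarrow> nat \<Rightarrow> nat \<Rightarrow> (nat \<times> nat) list set" where
  "Kset n s d = {xs. length xs = s \<and> (\<forall>p\<in>set xs. 0 < fst p \<and> snd p = n) \<and>
                   (\<Sum>i<length xs. fst (xs ! i) * snd (xs ! i)) = d}"

lemma finite_Kset: "0 < n \<Longrightarrow> finite (Kset n s d)"
proof -
  assume n0: "0 < n"
  have "Kset n s d \<subseteq> {xs. set xs \<subseteq> {0..d} \<times> {n} \<and> length xs = s}"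
  proof
    fix l assume l: "l \<in> Kset n s d"
    have "set l \<subseteq> {0..d} \<times> {n}"
    proof
      fix p assume p: "p \<in> set l"
      then obtain i where i: "i < length l" "l ! i = p" by (auto simp: in_set_conv_nth)
      have pos: "0 < fst p" "snd p = n" using l p by (auto simp: Kset_def)
      have "fst (l ! i) * snd (l ! i) \<le> (\<Sum>i<length l. fst (l ! i) * snd (l ! i))"
        using i by (intro member_le_sum) auto
      also have "\<dots> = d" using l unfolding Kset_def by blast
      finally have "fst p * snd p \<le> d" using i by simp
      moreover have "fst p \<le> fst p * snd p \<or> snd p = 0" by (cases "snd p") auto
      ultimately have "fst p \<le> d \<or> snd p = 0" by linarith
      then show "p \<in> {0..d} \<times> {n}" using pos n0
        by (cases p) (auto simp: Kset_def)
    qed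
    then show "l \<in> {xs. set xs \<subseteq> {0..d} \<times> {n} \<and> length xs = s}" using l by (simp add: Kset_def)
  qed
  moreover have "finite {xs. set xs \<subseteq> {0..d} \<times> {n} \<and> length xs = s}"
    by (rule finite_lists_length_eq) simp
  ultimately show ?thesis by (rule finite_subset)
qed

context
  fixes ts :: "(nat \<times> nat) list" and d :: nat
  assumes pos: "\<forall>i<length ts. 0 < fst (ts ! i) \<and> 0 < snd (ts ! i)"
    and deg: "(\<Sum>i<length ts. fst (ts ! i) * snd (ts ! i)) = d"
begin

definition kv :: "nat \<Rightarrow> nat \<Rightarrow> nat" where
  "kv n = (\<lambda>i. if i < length ts then snd (ts ! i) div n else 0)"

lemma arrL_eq_Cm:
  assumes n: "0 < n" and dv: "\<forall>i<length ts. n dvd snd (ts ! i)" and l: "l \<in> Kset n s d"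
  shows "arrL ts l = {A\<in>Cm (length ts) s (kv n). \<forall>j<s. (\<Sum>i<length ts. A i j * fst (ts ! i)) = fst (l ! j)}"
proof -
  have ls: "length l = s" and lp: "\<And>j. j < s \<Longrightarrow> 0 < fst (l ! j) \<and> snd (l ! j) = n"
    using l by (auto simp: Kset_def)
  have row: "(\<Sum>j<s. A i j * snd (l ! j)) = snd (ts ! i) \<longleftrightarrow> (\<Sum>j<s. A i j) = kv n i"
    if i: "i < length ts" for A i
  proof -
    have "(\<Sum>j<s. A i j * snd (l ! j)) = (\<Sum>j<s. A i j) * n"
      using lp by (simp add: sum_distrib_right)
    moreover obtain q where "snd (ts ! i) = q * n" using dv i by (metis dvd_def mult.commute)
    ultimately show ?thesis using n i by (simp add: kv_def)
  qed
  have col: "(\<exists>i<length ts. A i j \<noteq> 0)" if "(\<Sum>i<length ts. A i j * fst (ts ! i)) = fst (l ! j)" "j < s" for A j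
  proof (rule ccontr)
    assume "\<not> (\<exists>i<length ts. A i j \<noteq> 0)"
    then have "(\<Sum>i<length ts. A i j * fst (ts ! i)) = 0" by simp
    then have "fst (l ! j) = 0" using that(1) by simp
    with lp[OF that(2)] show False by simp
  qed
  show ?thesis
  proof (intro set_eqI iffI)
    fix A assume A: "A \<in> arrL ts l"
    have Z: "\<forall>i j. (i \<ge> length ts \<or> j \<ge> s) \<longrightarrow> A i j = 0"
      and R: "\<forall>i<length ts. (\<Sum>j<s. A i j * snd (l ! j)) = snd (ts ! i)"
      and C: "\<forall>j<s. (\<Sum>i<length ts. A i j * fst (ts ! i)) = fst (l ! j)"
      using A ls unfolding arrL_def by auto
    have "A \<in> Cm (length ts) s (kv n)" unfolding Cm_def
      using Z R C row col by blast
    then show "A \<in> {A\<in>Cm (length ts) s (kv n). \<forall>j<s. (\<Sum>i<length ts. A i j * fst (ts ! i)) = fst (l ! j)}"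
      using C by blast
  next
    fix A assume A: "A \<in> {A\<in>Cm (length ts) s (kv n). \<forall>j<s. (\<Sum>i<length ts. A i j * fst (ts ! i)) = fst (l ! j)}"
    have Z: "\<forall>i j. (i \<ge> length ts \<or> j \<ge> s) \<longrightarrow> A i j = 0"
      and R: "\<forall>i<length ts. (\<Sum>j<s. A i j) = kv n i"
      and C: "\<forall>j<s. (\<Sum>i<length ts. A i j * fst (ts ! i)) = fst (l ! j)"
      using A unfolding Cm_def by auto
    show "A \<in> arrL ts l" unfolding arrL_def using Z R C row ls by auto
  qed
qed

lemma Kset_arrL_empty:
  assumes n: "0 < n" and ndv: "\<not> (\<forall>i<length ts. n dvd snd (ts ! i))" and l: "l \<in> Kset n s d"
  shows "arrL ts l = {}"
proof (rule ccontr)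
  assume "arrL ts l \<noteq> {}"
  then obtain A where A: "A \<in> arrL ts l" by blast
  obtain i where i: "i < length ts" "\<not> n dvd snd (ts ! i)" using ndv by blast
  have ls: "length l = s" and lp: "\<And>j. j < s \<Longrightarrow> snd (l ! j) = n"
    using l by (auto simp: Kset_def)
  have "(\<Sum>j<s. A i j * snd (l ! j)) = snd (ts ! i)" using A i ls by (auto simp: arrL_def)
  moreover have "(\<Sum>j<s. A i j * snd (l ! j)) = (\<Sum>j<s. A i j) * n"
    using lp by (simp add: sum_distrib_right)
  ultimately show False using i(2) by (metis dvd_triv_right)
qed

lemma Cm_UN:
  assumes n: "0 < n" and dv: "\<forall>i<length ts. n dvd snd (ts ! i)"
  shows "Cm (length ts) s (kv n) = (\<Union>l\<in>Kset n s d. arrL ts l)"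
proof
  show "(\<Union>l\<in>Kset n s d. arrL ts l) \<subseteq> Cm (length ts) s (kv n)"
    using arrL_eq_Cm[OF n dv] by auto
next
  show "Cm (length ts) s (kv n) \<subseteq> (\<Union>l\<in>Kset n s d. arrL ts l)"
  proof
    fix A assume A: "A \<in> Cm (length ts) s (kv n)"
    define l where "l = map (\<lambda>j. (\<Sum>i<length ts. A i j * fst (ts ! i), n)) [0..<s]"
    have ll: "length l = s" by (simp add: l_def)
    have lj: "\<And>j. j < s \<Longrightarrow> l ! j = (\<Sum>i<length ts. A i j * fst (ts ! i), n)" by (simp add: l_def)
    have cpos: "0 < (\<Sum>i<length ts. A i j * fst (ts ! i))" if j: "j < s" for j
    proof -
      obtain i where i: "i < length ts" "A i j \<noteq> 0" using A j by (auto simp: Cm_def)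
      have "A i j * fst (ts ! i) \<le> (\<Sum>i<length ts. A i j * fst (ts ! i))"
        using i by (intro member_le_sum) auto
      moreover have "0 < A i j * fst (ts ! i)" using i pos by auto
      ultimately show ?thesis by linarith
    qed
    have "(\<Sum>j<length l. fst (l ! j) * snd (l ! j)) = (\<Sum>j<s. (\<Sum>i<length ts. A i j * fst (ts ! i)) * n)"
      using ll lj by simp
    also have "\<dots> = (\<Sum>j<s. \<Sum>i<length ts. A i j * fst (ts ! i) * n)"
      by (simp add: sum_distrib_right)
    also have "\<dots> = (\<Sum>i<length ts. \<Sum>j<s. A i j * fst (ts ! i) * n)"
      by (rule sum.swap)
    also have "\<dots> = (\<Sum>i<length ts. fst (ts ! i) * n * (\<Sum>j<s. A i j))"
      by (simp add: sum_distrib_left algebra_simps)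
    also have "\<dots> = (\<Sum>i<length ts. fst (ts ! i) * snd (ts ! i))"
    proof (rule sum.cong[OF refl])
      fix i assume "i \<in> {..<length ts}"
      then have "(\<Sum>j<s. A i j) = snd (ts ! i) div n" "n dvd snd (ts ! i)"
        using A dv by (auto simp: Cm_def kv_def)
      then show "fst (ts ! i) * n * (\<Sum>j<s. A i j) = fst (ts ! i) * snd (ts ! i)" by simp
    qed
    finally have "l \<in> Kset n s d" using ll lj cpos deg
      by (auto simp: Kset_def in_set_conv_nth)
    moreover have "A \<in> arrL ts l"
      using A ll lj by (simp add: arrL_eq_Cm[OF n dv \<open>l \<in> Kset n s d\<close>])
    ultimately show "A \<in> (\<Union>l\<in>Kset n s d. arrL ts l)" by blast
  qed
qed

lemma Kset_sum:
  assumes n: "0 < n"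
  shows "(\<Sum>l\<in>Kset n s d. card (arrL ts l)) = (if \<forall>i<length ts. n dvd snd (ts ! i) then Nm (length ts) s (kv n) else 0)"
proof (cases "\<forall>i<length ts. n dvd snd (ts ! i)")
  case True
  have "Nm (length ts) s (kv n) = card (\<Union>l\<in>Kset n s d. arrL ts l)"
    by (simp add: Nm_def Cm_UN[OF n True])
  also have "\<dots> = (\<Sum>l\<in>Kset n s d. card (arrL ts l))"
  proof (rule card_UN_disjoint[OF finite_Kset[OF n]])
    show "\<forall>l\<in>Kset n s d. finite (arrL ts l)"
    proof
      fix l assume "l \<in> Kset n s d"
      then have "arrL ts l \<subseteq> Cm (length ts) s (kv n)" by (subst arrL_eq_Cm[OF n True]) auto
      then show "finite (arrL ts l)" using finite_Cm by (rule finite_subset)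
    qed
    show "\<forall>l\<in>Kset n s d. \<forall>l'\<in>Kset n s d. l \<noteq> l' \<longrightarrow> arrL ts l \<inter> arrL ts l' = {}"
    proof (intro ballI impI)
      fix l l' assume l: "l \<in> Kset n s d" and l': "l' \<in> Kset n s d" and ne: "l \<noteq> l'"
      show "arrL ts l \<inter> arrL ts l' = {}"
      proof (rule ccontr)
        assume "arrL ts l \<inter> arrL ts l' \<noteq> {}"
        then obtain A where A: "A \<in> arrL ts l" "A \<in> arrL ts l'" by blast
        have "l = l'"
        proof (rule nth_equalityI)
          have len: "length l = s" "length l' = s" using l l' unfolding Kset_def by blast+
          then show "length l = length l'" by simp
          fix j assume j: "j < length l"
          have "fst (l ! j) = (\<Sum>i<length ts. A i j * fst (ts ! i))"
            using A(1) j unfolding arrL_def by auto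
          also have "\<dots> = fst (l' ! j)"
            using A(2) j len unfolding arrL_def by auto
          finally have "fst (l ! j) = fst (l' ! j)" .
          moreover have "snd (l ! j) = n" using l j nth_mem[OF j] unfolding Kset_def by blast
          moreover have "snd (l' ! j) = n" using l' j len nth_mem[of j l'] unfolding Kset_def by auto
          ultimately show "l ! j = l' ! j" by (simp add: prod_eq_iff)
        qed
        then show False using ne by simp
      qed
    qed
  qed
  finally show ?thesis using True by simp
next
  case False
  then show ?thesis using Kset_arrL_empty[OF n False] by (subst if_not_P[OF False]) simp
qed

end


definition Pset :: "nat \<Rightarrow> nat \<Rightarrow> nat \<Rightarrow> ptype set" where
  "Pset d n s = {\<nu>\<in>types_of_degree d. is_pure n \<nu> \<and> size \<nu> = s}"

lemma is_type_mset:
  "is_type d (mset xs) \<longleftrightarrow> (\<forall>p\<in>set xs. 0 < fst p \<and> 0 < snd p) \<and>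
     (\<Sum>i<length xs. fst (xs ! i) * snd (xs ! i)) = d"
  by (simp add: is_type_def sum_mset_list_nth)

lemma Kset_iff:
  assumes n: "0 < n"
  shows "xs \<in> Kset n s d \<longleftrightarrow> mset xs \<in> Pset d n s"
  using n by (auto simp: Kset_def Pset_def types_of_degree_def is_type_mset is_pure_def)

lemma Pset_sum:
  assumes n: "0 < n"
  shows "(\<Sum>\<nu>\<in>Pset d n s. card (permutations_of_multiset \<nu>) * arr_count \<tau> \<nu>)
       = (\<Sum>xs\<in>Kset n s d. card (arrL (sorted_list_of_multiset \<tau>) xs))"
proof -
  let ?ts = "sorted_list_of_multiset \<tau>"
  let ?g = "\<lambda>xs. card (arrL ?ts xs)"
  have "(\<Sum>xs\<in>Kset n s d. ?g xs) = (\<Sum>\<nu>\<in>mset ` Kset n s d. \<Sum>xs\<in>{xs \<in> Kset n s d. mset xs = \<nu>}. ?g xs)"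
    by (rule sum.image_gen[OF finite_Kset[OF n]])
  also have "mset ` Kset n s d = Pset d n s"
  proof
    show "mset ` Kset n s d \<subseteq> Pset d n s" using Kset_iff[OF n] by auto
    show "Pset d n s \<subseteq> mset ` Kset n s d"
    proof
      fix \<nu> assume "\<nu> \<in> Pset d n s"
      then have "sorted_list_of_multiset \<nu> \<in> Kset n s d" using Kset_iff[OF n] by simp
      then show "\<nu> \<in> mset ` Kset n s d" by (metis image_eqI mset_sorted_list_of_multiset)
    qed
  qed
  also have "(\<Sum>\<nu>\<in>Pset d n s. \<Sum>xs\<in>{xs \<in> Kset n s d. mset xs = \<nu>}. ?g xs)
      = (\<Sum>\<nu>\<in>Pset d n s. card (permutations_of_multiset \<nu>) * arr_count \<tau> \<nu>)"
  proof (rule sum.cong[OF refl])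
    fix \<nu> assume \<nu>: "\<nu> \<in> Pset d n s"
    have e: "{xs \<in> Kset n s d. mset xs = \<nu>} = permutations_of_multiset \<nu>"
      using \<nu> Kset_iff[OF n] by (auto simp: permutations_of_multiset_def)
    have "(\<Sum>xs\<in>permutations_of_multiset \<nu>. ?g xs) = (\<Sum>xs\<in>permutations_of_multiset \<nu>. arr_count \<tau> \<nu>)"
    proof (rule sum.cong[OF refl])
      fix xs assume "xs \<in> permutations_of_multiset \<nu>"
      then have "mset xs = mset (sorted_list_of_multiset \<nu>)" by (simp add: permutations_of_multiset_def)
      then show "?g xs = arr_count \<tau> \<nu>"
        by (simp add: arrL_perm arr_count_def arrangements_arrL)
    qed
    then show "(\<Sum>xs\<in>{xs \<in> Kset n s d. mset xs = \<nu>}. ?g xs) = card (permutations_of_multiset \<nu>) * arr_count \<tau> \<nu>"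
      by (simp add: e)
  qed
  finally show ?thesis by simp
qed

lemma perm_count_rat:
  assumes t: "is_type d \<nu>" and p: "is_pure n \<nu>" and n: "0 < n"
  shows "(of_nat (fact (size \<nu>)) / of_nat (\<Prod>b\<in>{1..d div n}. fact (count \<nu> (b, n))) :: rat)
         = of_nat (card (permutations_of_multiset \<nu>))"
proof -
  have sub: "set_mset \<nu> \<subseteq> (\<lambda>b. (b, n)) ` {1..d div n}"
  proof
    fix x assume x: "x \<in> set_mset \<nu>"
    obtain b m where xb: "x = (b, m)" by (cases x)
    have m: "m = n" using p x xb by (auto simp: is_pure_def)
    have b0: "0 < b" using t x xb by (auto simp: is_type_def)
    have "b * n \<le> (\<Sum>p\<in>#\<nu>. fst p * snd p)"
    proof -
      have "(\<Sum>p\<in>#\<nu>. fst p * snd p) = fst x * snd x + (\<Sum>p\<in>#\<nu> - {#x#}. fst p * snd p)"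
        using x by (metis (no_types, lifting) insert_DiffM sum_mset.insert)
      then show ?thesis using xb m by simp
    qed
    then have "b * n \<le> d" using t by (simp add: is_type_def)
    then have "b \<le> d div n" using n by (simp add: less_eq_div_iff_mult_less_eq)
    then show "x \<in> (\<lambda>b. (b, n)) ` {1..d div n}" using xb m b0 by auto
  qed
  have "(\<Prod>b\<in>{1..d div n}. fact (count \<nu> (b, n))) = (\<Prod>x\<in>(\<lambda>b. (b, n)) ` {1..d div n}. fact (count \<nu> x) :: nat)"
    by (subst prod.reindex) (auto simp: inj_on_def)
  also have "\<dots> = (\<Prod>x\<in>set_mset \<nu>. fact (count \<nu> x))"
    by (rule prod.mono_neutral_right) (use sub in \<open>auto simp: not_in_iff\<close>)
  finally have e: "(\<Prod>b\<in>{1..d div n}. fact (count \<nu> (b, n))) = (\<Prod>x\<in>set_mset \<nu>. fact (count \<nu> x) :: nat)" .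
  have a: "card (permutations_of_multiset \<nu>) * (\<Prod>x\<in>set_mset \<nu>. fact (count \<nu> x)) = fact (size \<nu>)"
    by (rule card_permutations_of_multiset_aux)
  have nz: "(\<Prod>x\<in>set_mset \<nu>. fact (count \<nu> x) :: nat) \<noteq> 0" by simp
  show ?thesis unfolding e
    using a nz by (metis (mono_tags, lifting) nonzero_mult_div_cancel_right of_nat_eq_0_iff of_nat_mult)
qed


lemma type_elem_le:
  assumes t: "is_type d \<nu>" and x: "x \<in># \<nu>"
  shows "fst x * snd x \<le> d"
proof -
  have "(\<Sum>p\<in>#\<nu>. fst p * snd p) = fst x * snd x + (\<Sum>p\<in>#\<nu> - {#x#}. fst p * snd p)"
    using x by (metis (no_types, lifting) insert_DiffM sum_mset.insert)
  then show ?thesis using t by (simp add: is_type_def)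
qed

lemma type_size_le:
  assumes t: "is_type d \<nu>"
  shows "size \<nu> \<le> d"
proof -
  have "size \<nu> = (\<Sum>p\<in>#\<nu>. 1::nat)" by (rule size_eq_sum_mset)
  also have "\<dots> \<le> (\<Sum>p\<in>#\<nu>. fst p * snd p)"
    by (rule sum_mset_mono) (use t in \<open>auto simp: is_type_def Suc_le_eq\<close>)
  also have "\<dots> = d" using t by (simp add: is_type_def)
  finally show ?thesis .
qed

lemma finite_types: "finite (types_of_degree d)"
proof -
  have "types_of_degree d \<subseteq> mset ` {xs. set xs \<subseteq> {0..d} \<times> {0..d} \<and> length xs \<le> d}"
  proof
    fix \<nu> assume "\<nu> \<in> types_of_degree d"
    then have t: "is_type d \<nu>" by (simp add: types_of_degree_def)
    have "set (sorted_list_of_multiset \<nu>) \<subseteq> {0..d} \<times> {0..d}"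
    proof
      fix x assume "x \<in> set (sorted_list_of_multiset \<nu>)"
      then have x: "x \<in># \<nu>" by simp
      have le: "fst x * snd x \<le> d" by (rule type_elem_le[OF t x])
      have "0 < fst x" "0 < snd x" using t x by (auto simp: is_type_def)
      then have "fst x \<le> fst x * snd x" "snd x \<le> fst x * snd x" by simp_all
      then have "fst x \<le> d" "snd x \<le> d" using le by linarith+
      then show "x \<in> {0..d} \<times> {0..d}" by (cases x) auto
    qed
    moreover have "length (sorted_list_of_multiset \<nu>) \<le> d"
    proof -
      have "size (mset (sorted_list_of_multiset \<nu>)) \<le> d" using type_size_le[OF t] by simp
      then show ?thesis by (simp only: size_mset)
    qed
    ultimately show "\<nu> \<in> mset ` {xs. set xs \<subseteq> {0..d} \<times> {0..d} \<and> length xs \<le> d}"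
      by (intro image_eqI[where x="sorted_list_of_multiset \<nu>"]) auto
  qed
  moreover have "finite {xs. set xs \<subseteq> {0..d} \<times> {0..d} \<and> length xs \<le> (d::nat)}"
    by (rule finite_lists_length_le) simp
  ultimately show ?thesis by (rule finite_subset[OF _ finite_imageI])
qed

definition Fc :: "nat \<Rightarrow> nat \<Rightarrow> ptype \<Rightarrow> rat" where
  "Fc d n \<nu> = (of_int (mobius_mu n) / of_nat n) *
              ((-1) ^ (size \<nu> - 1) / of_nat (size \<nu>)) *
              (of_nat (fact (size \<nu>)) /
               of_nat (\<Prod>b \<in> {1..d div n}. fact (count \<nu> (b, n))))"

definition fcol :: "nat \<Rightarrow> ptype \<Rightarrow> rat" where
  "fcol d \<nu> = (\<Sum>n\<in>{1..d}. if is_pure n \<nu> then Fc d n \<nu> else 0)"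


lemma main_sum:
  assumes d: "1 \<le> d" and \<tau>: "\<tau> \<in> types_of_degree d"
  shows "(\<Sum>\<nu>\<in>types_of_degree d. of_nat (arr_count \<tau> \<nu>) * fcol d \<nu>) = (if \<tau> = {#(d, 1)#} then 1 else (0::rat))"
proof -
  define T where "T = types_of_degree d"
  define ts where "ts = sorted_list_of_multiset \<tau>"
  define r where "r = length ts"
  have t: "is_type d \<tau>" using \<tau> by (simp add: types_of_degree_def)
  have mts: "mset ts = \<tau>" by (simp add: ts_def)
  have pos: "\<forall>i<length ts. 0 < fst (ts ! i) \<and> 0 < snd (ts ! i)"
  proof (intro allI impI)
    fix i assume "i < length ts"
    then have "ts ! i \<in># \<tau>" using mts by (metis nth_mem set_mset_mset)
    then show "0 < fst (ts ! i) \<and> 0 < snd (ts ! i)" using t by (simp add: is_type_def)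
  qed
  have deg: "(\<Sum>i<length ts. fst (ts ! i) * snd (ts ! i)) = d"
  proof -
    have "(\<Sum>p\<in>#mset ts. fst p * snd p) = (\<Sum>i<length ts. fst (ts ! i) * snd (ts ! i))"
      by (rule sum_mset_list_nth)
    then show ?thesis using t mts by (simp add: is_type_def)
  qed
  have fT: "finite T" by (simp add: T_def finite_types)
  have r0: "0 < r"
  proof (rule ccontr)
    assume "\<not> 0 < r" then have "ts = []" by (simp add: r_def)
    then show False using deg d by simp
  qed
  let ?G = "\<lambda>\<nu>. (of_nat (arr_count \<tau> \<nu>) :: rat)"
  let ?c = "\<lambda>n s. (of_int (mobius_mu n) / of_nat n) * ((-1) ^ (s - 1) / of_nat s :: rat)"
  have "(\<Sum>\<nu>\<in>T. ?G \<nu> * fcol d \<nu>) = (\<Sum>\<nu>\<in>T. \<Sum>n\<in>{1..d}. if is_pure n \<nu> then ?G \<nu> * Fc d n \<nu> else 0)"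
    by (simp add: fcol_def sum_distrib_left if_distrib cong: if_cong)
  also have "\<dots> = (\<Sum>n\<in>{1..d}. \<Sum>\<nu>\<in>T. if is_pure n \<nu> then ?G \<nu> * Fc d n \<nu> else 0)"
    by (rule sum.swap)
  also have "\<dots> = (\<Sum>n\<in>{1..d}. \<Sum>s\<in>{1..d}. ?c n s * of_nat (\<Sum>\<nu>\<in>Pset d n s. card (permutations_of_multiset \<nu>) * arr_count \<tau> \<nu>))"
  proof (rule sum.cong[OF refl])
    fix n assume n: "n \<in> {1..d}"
    have "(\<Sum>\<nu>\<in>T. if is_pure n \<nu> then ?G \<nu> * Fc d n \<nu> else 0) = (\<Sum>\<nu>\<in>{\<nu>\<in>T. is_pure n \<nu>}. ?G \<nu> * Fc d n \<nu>)"
      by (rule sum.inter_filter[symmetric, OF fT])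
    also have "\<dots> = (\<Sum>s\<in>{1..d}. \<Sum>\<nu>\<in>{x. x \<in> {\<nu>\<in>T. is_pure n \<nu>} \<and> size x = s}. ?G \<nu> * Fc d n \<nu>)"
    proof (rule sum.group[symmetric])
      show "finite {\<nu>\<in>T. is_pure n \<nu>}" using fT by simp
      show "size ` {\<nu>\<in>T. is_pure n \<nu>} \<subseteq> {1..d}"
      proof
        fix s assume "s \<in> size ` {\<nu>\<in>T. is_pure n \<nu>}"
        then obtain \<nu> where \<nu>: "\<nu> \<in> T" "s = size \<nu>" by blast
        then have tn: "is_type d \<nu>" by (simp add: T_def types_of_degree_def)
        have "\<nu> \<noteq> {#}" using tn d by (auto simp: is_type_def)
        then have "1 \<le> size \<nu>" by (simp add: Suc_le_eq nonempty_has_size)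
        then show "s \<in> {1..d}" using type_size_le[OF tn] \<nu> by simp
      qed
    qed simp
    also have "\<dots> = (\<Sum>s\<in>{1..d}. ?c n s * of_nat (\<Sum>\<nu>\<in>Pset d n s. card (permutations_of_multiset \<nu>) * arr_count \<tau> \<nu>))"
    proof (rule sum.cong[OF refl])
      fix s assume s: "s \<in> {1..d}"
      have e: "{x. x \<in> {\<nu>\<in>T. is_pure n \<nu>} \<and> size x = s} = Pset d n s"
        by (auto simp: Pset_def T_def)
      have "(\<Sum>\<nu>\<in>Pset d n s. ?G \<nu> * Fc d n \<nu>) = (\<Sum>\<nu>\<in>Pset d n s. ?c n s * of_nat (card (permutations_of_multiset \<nu>) * arr_count \<tau> \<nu>))"
      proof (rule sum.cong[OF refl])
        fix \<nu> assume \<nu>: "\<nu> \<in> Pset d n s"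
        then have tn: "is_type d \<nu>" "is_pure n \<nu>" "size \<nu> = s"
          by (auto simp: Pset_def types_of_degree_def)
        have "Fc d n \<nu> = ?c n s * of_nat (card (permutations_of_multiset \<nu>))"
          unfolding Fc_def using perm_count_rat[OF tn(1) tn(2)] n tn(3) by simp
        then show "?G \<nu> * Fc d n \<nu> = ?c n s * of_nat (card (permutations_of_multiset \<nu>) * arr_count \<tau> \<nu>)"
          by (simp add: algebra_simps)
      qed
      also have "\<dots> = ?c n s * of_nat (\<Sum>\<nu>\<in>Pset d n s. card (permutations_of_multiset \<nu>) * arr_count \<tau> \<nu>)"
        by (simp add: sum_distrib_left)
      finally have X: "(\<Sum>\<nu>\<in>Pset d n s. ?G \<nu> * Fc d n \<nu>) = ?c n s * of_nat (\<Sum>\<nu>\<in>Pset d n s. card (permutations_of_multiset \<nu>) * arr_count \<tau> \<nu>)" .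
      show "(\<Sum>\<nu>\<in>{x. x \<in> {\<nu>\<in>T. is_pure n \<nu>} \<and> size x = s}. ?G \<nu> * Fc d n \<nu>) = ?c n s * of_nat (\<Sum>\<nu>\<in>Pset d n s. card (permutations_of_multiset \<nu>) * arr_count \<tau> \<nu>)"
        unfolding e by (rule X)
    qed
    finally show "(\<Sum>\<nu>\<in>T. if is_pure n \<nu> then ?G \<nu> * Fc d n \<nu> else 0) = (\<Sum>s\<in>{1..d}. ?c n s * of_nat (\<Sum>\<nu>\<in>Pset d n s. card (permutations_of_multiset \<nu>) * arr_count \<tau> \<nu>))" .
  qed
  also have "\<dots> = (\<Sum>n\<in>{1..d}. of_int (mobius_mu n) / of_nat n *
       (if \<forall>i<r. n dvd snd (ts ! i) then (if r = 1 then 1 / of_nat (kv ts n 0) else 0) else 0))"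
  proof (rule sum.cong[OF refl])
    fix n assume n: "n \<in> {1..d}"
    then have n0: "0 < n" by simp
    have "(\<Sum>s\<in>{1..d}. ?c n s * of_nat (\<Sum>\<nu>\<in>Pset d n s. card (permutations_of_multiset \<nu>) * arr_count \<tau> \<nu>))
        = (\<Sum>s\<in>{1..d}. ?c n s * of_nat (if \<forall>i<length ts. n dvd snd (ts ! i) then Nm (length ts) s (kv ts n) else 0))"
      by (simp add: Pset_sum[OF n0] ts_def[symmetric] Kset_sum[OF pos deg n0])
    also have "\<dots> = (\<Sum>s\<in>{1..d}. ?c n s * of_nat (if \<forall>i<r. n dvd snd (ts ! i) then Nm r s (kv ts n) else 0))"
      unfolding r_def ..
    also have "\<dots> = of_int (mobius_mu n) / of_nat n *
       (if \<forall>i<r. n dvd snd (ts ! i) then (\<Sum>s\<in>{1..d}. ((-1) ^ (s - 1) / of_nat s) * of_nat (Nm r s (kv ts n))) else 0)"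
    proof (cases "\<forall>i<r. n dvd snd (ts ! i)")
      case True
      show ?thesis by (simp only: if_P[OF True] sum_distrib_left mult.assoc)
    next
      case False
      show ?thesis by (simp only: if_not_P[OF False]) simp
    qed
    also have "\<dots> = of_int (mobius_mu n) / of_nat n *
       (if \<forall>i<r. n dvd snd (ts ! i) then (if r = 1 then 1 / of_nat (kv ts n 0) else 0) else 0)"
    proof (cases "\<forall>i<r. n dvd snd (ts ! i)")
      case True
      have kv: "kv ts n = (\<lambda>i. if i < r then snd (ts ! i) div n else 0)"
        using kv_def[OF pos deg] r_def by simp
      have vk: "vec r (kv ts n)" by (simp add: kv vec_def)
      have pk: "\<forall>i<r. 1 \<le> kv ts n i"
      proof (intro allI impI)
        fix i assume i: "i < r"
        then have "n dvd snd (ts ! i)" "0 < snd (ts ! i)" using True pos r_def by auto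
        then have "n \<le> snd (ts ! i)" by (simp add: dvd_imp_le)
        then have "0 < snd (ts ! i) div n" using n0 by (simp add: div_greater_zero_iff)
        then show "1 \<le> kv ts n i" using i by (simp add: kv)
      qed
      have vd: "vsum r (kv ts n) \<le> d"
      proof -
        have "vsum r (kv ts n) \<le> (\<Sum>i<r. fst (ts ! i) * snd (ts ! i))"
          unfolding vsum_def
        proof (rule sum_mono)
          fix i assume "i \<in> {..<r}"
          then have "0 < fst (ts ! i)" using pos r_def by simp
          then have "snd (ts ! i) \<le> fst (ts ! i) * snd (ts ! i)" by simp
          moreover have "snd (ts ! i) div n \<le> snd (ts ! i)" by simp
          ultimately have "snd (ts ! i) div n \<le> fst (ts ! i) * snd (ts ! i)" by (rule order_trans[rotated])
          then show "kv ts n i \<le> fst (ts ! i) * snd (ts ! i)" using \<open>i \<in> {..<r}\<close> by (simp add: kv)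
        qed
        then show ?thesis using deg r_def by simp
      qed
      show ?thesis using True L_rat[OF r0 vk pk vd] by simp
    next
      case False
      show ?thesis by (simp only: if_not_P[OF False])
    qed
    finally show "(\<Sum>s\<in>{1..d}. ?c n s * of_nat (\<Sum>\<nu>\<in>Pset d n s. card (permutations_of_multiset \<nu>) * arr_count \<tau> \<nu>))
      = of_int (mobius_mu n) / of_nat n * (if \<forall>i<r. n dvd snd (ts ! i) then (if r = 1 then 1 / of_nat (kv ts n 0) else 0) else 0)" .
  qed
  also have "\<dots> = (if \<tau> = {#(d, 1)#} then 1 else 0)"
  proof (cases "r = 1")
    case False
    have "\<tau> \<noteq> {#(d, 1)#}"
    proof
      assume "\<tau> = {#(d, 1)#}"
      then have "size \<tau> = 1" by simp
      then show False using False mts r_def by (metis size_mset)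
    qed
    then show ?thesis using False by (simp cong: if_cong)
  next
    case True
    obtain b m where bm: "ts ! 0 = (b, m)" by (cases "ts ! 0")
    have tsbm: "ts = [(b, m)]" using True bm r_def by (cases ts) auto
    have \<tau>e: "\<tau> = {#(b, m)#}" using mts tsbm by simp
    have bmd: "b * m = d" using deg tsbm by simp
    have m0: "0 < m" "0 < b" using pos tsbm by auto
    have md: "m \<le> d" using bmd m0 by (metis dvd_imp_le dvd_triv_right gr0I mult_is_0 d le_zero_eq not_one_le_zero)
    have kv0: "kv ts n 0 = m div n" for n using kv_def[OF pos deg] tsbm by simp
    have "(\<Sum>n\<in>{1..d}. of_int (mobius_mu n) / of_nat n *
       (if \<forall>i<r. n dvd snd (ts ! i) then (if r = 1 then 1 / of_nat (kv ts n 0) else 0) else (0::rat)))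
       = (\<Sum>n\<in>{1..d}. if n dvd m then of_int (mobius_mu n) / of_nat m else 0)"
    proof (rule sum.cong[OF refl])
      fix n assume n: "n \<in> {1..d}"
      show "of_int (mobius_mu n) / of_nat n *
       (if \<forall>i<r. n dvd snd (ts ! i) then (if r = 1 then 1 / of_nat (kv ts n 0) else 0) else (0::rat))
        = (if n dvd m then of_int (mobius_mu n) / of_nat m else 0)"
      proof (cases "n dvd m")
        case True
        then obtain q where q: "m = n * q" by blast
        have "q = m div n" using q n by simp
        then show ?thesis using True \<open>r = 1\<close> tsbm kv0 q n by (auto simp: r_def)
      next
        case False
        then show ?thesis using tsbm \<open>r = 1\<close> by (auto simp: r_def)
      qed
    qed
    also have "\<dots> = (\<Sum>n\<in>{n\<in>{1..d}. n dvd m}. of_int (mobius_mu n) / of_nat m)"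
      by (rule sum.inter_filter[symmetric]) simp
    also have "{n\<in>{1..d}. n dvd m} = {n. n dvd m}"
      using m0 md by (auto intro: order_trans[OF dvd_imp_le] simp: Suc_le_eq dvd_pos_nat)
    also have "(\<Sum>n\<in>{n. n dvd m}. of_int (mobius_mu n) / of_nat m) = (of_int (\<Sum>n | n dvd m. mobius_mu n) / of_nat m :: rat)"
      by (simp add: sum_divide_distrib)
    also have "\<dots> = (if m = 1 then 1 else 0)" using mobius_sum[OF m0(1)] by simp
    also have "\<dots> = (if \<tau> = {#(d, 1)#} then 1 else 0)"
      using \<tau>e bmd by auto
    finally show ?thesis .
  qed
  finally show ?thesis by (simp add: T_def)
qed


lemma tri_inj:
  fixes a :: "'a \<Rightarrow> 'a \<Rightarrow> nat" and key :: "'a \<Rightarrow> int \<times> int" and x :: "'a \<Rightarrow> rat"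
  assumes fT: "finite T"
    and tri: "\<And>\<tau> \<nu>. \<tau> \<in> T \<Longrightarrow> \<nu> \<in> T \<Longrightarrow> a \<tau> \<nu> \<noteq> 0 \<Longrightarrow> \<nu> \<noteq> \<tau> \<Longrightarrow> key \<nu> < key \<tau>"
    and diag: "\<And>\<tau>. \<tau> \<in> T \<Longrightarrow> a \<tau> \<tau> \<noteq> 0"
    and h: "\<forall>\<tau>\<in>T. (\<Sum>\<nu>\<in>T. of_nat (a \<tau> \<nu>) * x \<nu>) = 0"
  shows "\<forall>\<tau>\<in>T. x \<tau> = 0"
proof (rule ccontr)
  assume "\<not> (\<forall>\<tau>\<in>T. x \<tau> = 0)"
  then have Zne: "{\<tau>\<in>T. x \<tau> \<noteq> 0} \<noteq> {}" by auto
  let ?Z = "{\<tau>\<in>T. x \<tau> \<noteq> 0}"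
  have fZ: "finite ?Z" using fT by simp
  have "Min (key ` ?Z) \<in> key ` ?Z" using fZ Zne by (intro Min_in) auto
  then obtain \<tau>0 where t0: "\<tau>0 \<in> ?Z" "key \<tau>0 = Min (key ` ?Z)" by auto
  have minz: "\<And>\<nu>. \<nu> \<in> ?Z \<Longrightarrow> key \<tau>0 \<le> key \<nu>" using t0(2) fZ by simp
  have rest: "(\<Sum>\<nu>\<in>T - {\<tau>0}. of_nat (a \<tau>0 \<nu>) * x \<nu>) = 0"
  proof (rule sum.neutral, rule ballI)
    fix \<nu> assume \<nu>: "\<nu> \<in> T - {\<tau>0}"
    show "of_nat (a \<tau>0 \<nu>) * x \<nu> = 0"
    proof (cases "a \<tau>0 \<nu> = 0")
      case False
      then have "key \<nu> < key \<tau>0" using tri[of \<tau>0 \<nu>] t0(1) \<nu> by auto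
      then have "\<nu> \<notin> ?Z" using minz by (meson leD)
      then show ?thesis using \<nu> by simp
    qed simp
  qed
  have "(\<Sum>\<nu>\<in>T. of_nat (a \<tau>0 \<nu>) * x \<nu>) = of_nat (a \<tau>0 \<tau>0) * x \<tau>0 + (\<Sum>\<nu>\<in>T - {\<tau>0}. of_nat (a \<tau>0 \<nu>) * x \<nu>)"
    by (subst sum.remove[OF fT, of \<tau>0]) (use t0(1) in auto)
  then have "of_nat (a \<tau>0 \<tau>0) * x \<tau>0 = 0" using h t0(1) rest by simp
  then show False using diag[of \<tau>0] t0(1) by simp
qed

lemma tri_solve_aux:
  fixes a :: "'a \<Rightarrow> 'a \<Rightarrow> nat" and key :: "'a \<Rightarrow> int \<times> int" and b :: "'a \<Rightarrow> rat"
  assumes fT: "finite T"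
    and tri: "\<And>\<tau> \<nu>. \<tau> \<in> T \<Longrightarrow> \<nu> \<in> T \<Longrightarrow> a \<tau> \<nu> \<noteq> 0 \<Longrightarrow> \<nu> \<noteq> \<tau> \<Longrightarrow> key \<nu> < key \<tau>"
    and diag: "\<And>\<tau>. \<tau> \<in> T \<Longrightarrow> a \<tau> \<tau> \<noteq> 0"
  shows "S \<subseteq> T \<Longrightarrow> (\<forall>\<tau>\<in>S. \<forall>\<nu>\<in>T. a \<tau> \<nu> \<noteq> 0 \<longrightarrow> \<nu> \<in> S) \<Longrightarrow>
         \<exists>x. \<forall>\<tau>\<in>S. (\<Sum>\<nu>\<in>T. of_nat (a \<tau> \<nu>) * x \<nu>) = b \<tau>"
proof (induction "card S" arbitrary: S rule: less_induct)
  case less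
  show ?case
  proof (cases "S = {}")
    case True then show ?thesis by simp
  next
    case False
    have fS: "finite S" using less.prems(1) fT finite_subset by blast
    have "Max (key ` S) \<in> key ` S" using fS False by (intro Max_in) auto
    then obtain \<tau>0 where t0: "\<tau>0 \<in> S" "key \<tau>0 = Max (key ` S)" by auto
    have maxs: "\<And>\<nu>. \<nu> \<in> S \<Longrightarrow> key \<nu> \<le> key \<tau>0" using t0(2) fS by simp
    let ?S' = "S - {\<tau>0}"
    have noto: "a \<tau> \<tau>0 = 0" if "\<tau> \<in> ?S'" for \<tau>
    proof (rule ccontr)
      assume "a \<tau> \<tau>0 \<noteq> 0"
      moreover have "\<tau> \<in> T" "\<tau>0 \<in> T" "\<tau>0 \<noteq> \<tau>" using that t0(1) less.prems(1) by auto
      ultimately have "key \<tau>0 < key \<tau>" by (intro tri)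
      then show False using maxs[of \<tau>] that by auto
    qed
    have cl: "\<forall>\<tau>\<in>?S'. \<forall>\<nu>\<in>T. a \<tau> \<nu> \<noteq> 0 \<longrightarrow> \<nu> \<in> ?S'"
    proof (intro ballI impI)
      fix \<tau> \<nu> assume \<tau>: "\<tau> \<in> ?S'" and \<nu>: "\<nu> \<in> T" and h: "a \<tau> \<nu> \<noteq> 0"
      have "\<nu> \<in> S" using less.prems(2) \<tau> \<nu> h by blast
      moreover have "\<nu> \<noteq> \<tau>0" using noto[OF \<tau>] h by auto
      ultimately show "\<nu> \<in> ?S'" by simp
    qed
    have "card ?S' < card S" by (rule card_Diff1_less[OF fS t0(1)])
    moreover have "?S' \<subseteq> T" using less.prems(1) by auto
    ultimately have "\<exists>x. \<forall>\<tau>\<in>?S'. (\<Sum>\<nu>\<in>T. of_nat (a \<tau> \<nu>) * x \<nu>) = b \<tau>"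
      using cl by (rule less.hyps)
    then obtain x where x: "\<forall>\<tau>\<in>?S'. (\<Sum>\<nu>\<in>T. of_nat (a \<tau> \<nu>) * x \<nu>) = b \<tau>" by blast
    define x' where "x' = x(\<tau>0 := (b \<tau>0 - (\<Sum>\<nu>\<in>T - {\<tau>0}. of_nat (a \<tau>0 \<nu>) * x \<nu>)) / of_nat (a \<tau>0 \<tau>0))"
    have t0T: "\<tau>0 \<in> T" using t0(1) less.prems(1) by auto
    have "\<forall>\<tau>\<in>S. (\<Sum>\<nu>\<in>T. of_nat (a \<tau> \<nu>) * x' \<nu>) = b \<tau>"
    proof
      fix \<tau> assume \<tau>: "\<tau> \<in> S"
      have split: "(\<Sum>\<nu>\<in>T. of_nat (a \<tau> \<nu>) * x' \<nu>) = of_nat (a \<tau> \<tau>0) * x' \<tau>0 + (\<Sum>\<nu>\<in>T - {\<tau>0}. of_nat (a \<tau> \<nu>) * x \<nu>)"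
      proof -
        have "(\<Sum>\<nu>\<in>T. of_nat (a \<tau> \<nu>) * x' \<nu>) = of_nat (a \<tau> \<tau>0) * x' \<tau>0 + (\<Sum>\<nu>\<in>T - {\<tau>0}. of_nat (a \<tau> \<nu>) * x' \<nu>)"
          by (subst sum.remove[OF fT, of \<tau>0]) (use t0T in auto)
        moreover have "(\<Sum>\<nu>\<in>T - {\<tau>0}. of_nat (a \<tau> \<nu>) * x' \<nu>) = (\<Sum>\<nu>\<in>T - {\<tau>0}. of_nat (a \<tau> \<nu>) * x \<nu>)"
          by (intro sum.cong) (auto simp: x'_def)
        ultimately show ?thesis by simp
      qed
      show "(\<Sum>\<nu>\<in>T. of_nat (a \<tau> \<nu>) * x' \<nu>) = b \<tau>"
      proof (cases "\<tau> = \<tau>0")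
        case True
        have "a \<tau>0 \<tau>0 \<noteq> 0" using diag t0T by simp
        then have "of_nat (a \<tau>0 \<tau>0) * x' \<tau>0 = b \<tau>0 - (\<Sum>\<nu>\<in>T - {\<tau>0}. of_nat (a \<tau>0 \<nu>) * x \<nu>)"
          by (simp add: x'_def)
        then show ?thesis using split True by simp
      next
        case False
        then have \<tau>': "\<tau> \<in> ?S'" using \<tau> by simp
        have "(\<Sum>\<nu>\<in>T. of_nat (a \<tau> \<nu>) * x \<nu>) = of_nat (a \<tau> \<tau>0) * x \<tau>0 + (\<Sum>\<nu>\<in>T - {\<tau>0}. of_nat (a \<tau> \<nu>) * x \<nu>)"
          by (subst sum.remove[OF fT, of \<tau>0]) (use t0T in auto)
        then show ?thesis using split noto[OF \<tau>'] x \<tau>' by simp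
      qed
    qed
    then show ?thesis by blast
  qed
qed

lemma arr_tri_inverse:
  fixes key :: "ptype \<Rightarrow> int \<times> int"
  assumes tri: "\<And>\<tau> \<nu>. \<tau> \<in> types_of_degree d \<Longrightarrow> \<nu> \<in> types_of_degree d \<Longrightarrow> arr_count \<tau> \<nu> \<noteq> 0 \<Longrightarrow> \<nu> \<noteq> \<tau> \<Longrightarrow> key \<nu> < key \<tau>"
    and diag: "\<And>\<tau>. \<tau> \<in> types_of_degree d \<Longrightarrow> arr_count \<tau> \<tau> \<noteq> 0"
    and \<sigma>0: "\<sigma>0 \<in> types_of_degree d"
    and y: "\<forall>\<tau>\<in>types_of_degree d. (\<Sum>\<nu>\<in>types_of_degree d. of_nat (arr_count \<tau> \<nu>) * y \<nu>) = (if \<tau> = \<sigma>0 then 1 else 0)"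
    and \<tau>: "\<tau> \<in> types_of_degree d"
  shows "arr_inv d \<tau> \<sigma>0 = y \<tau>"
proof -
  let ?T = "types_of_degree d"
  have fT: "finite ?T" by (rule finite_types)
  let ?P = "\<lambda>g. (\<forall>\<tau> \<in> ?T. \<forall>\<sigma> \<in> ?T.
         (\<Sum>\<nu> \<in> ?T. of_nat (arr_count \<tau> \<nu>) * g \<nu> \<sigma>) = (if \<tau> = \<sigma> then 1 else 0)) \<and>
      (\<forall>\<tau> \<sigma>. (\<tau> \<notin> ?T \<or> \<sigma> \<notin> ?T) \<longrightarrow> g \<tau> \<sigma> = (0::rat))"
  have inj: "\<And>x. \<forall>\<tau>\<in>?T. (\<Sum>\<nu>\<in>?T. of_nat (arr_count \<tau> \<nu>) * x \<nu>) = 0 \<Longrightarrow> \<forall>\<tau>\<in>?T. x \<tau> = (0::rat)"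
    by (rule tri_inj[where a=arr_count and key=key and T="?T", OF fT tri diag]) auto
  have ex: "\<exists>x. \<forall>\<tau>\<in>?T. (\<Sum>\<nu>\<in>?T. of_nat (arr_count \<tau> \<nu>) * x \<nu>) = (if \<tau> = \<sigma> then 1 else (0::rat))" for \<sigma>
    using tri_solve_aux[where a=arr_count and key=key and T="?T" and S="?T" and b="\<lambda>\<tau>. if \<tau> = \<sigma> then 1 else 0", OF fT tri diag] by blast
  define X where "X \<sigma> = (SOME x. \<forall>\<tau>\<in>?T. (\<Sum>\<nu>\<in>?T. of_nat (arr_count \<tau> \<nu>) * x \<nu>) = (if \<tau> = \<sigma> then 1 else (0::rat)))" for \<sigma>
  have X: "\<forall>\<tau>\<in>?T. (\<Sum>\<nu>\<in>?T. of_nat (arr_count \<tau> \<nu>) * X \<sigma> \<nu>) = (if \<tau> = \<sigma> then 1 else (0::rat))" for \<sigma>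
    unfolding X_def by (rule someI_ex[OF ex])
  define g where "g \<tau> \<sigma> = (if \<tau> \<in> ?T \<and> \<sigma> \<in> ?T then X \<sigma> \<tau> else 0)" for \<tau> \<sigma>
  have Pg: "?P g"
  proof (intro conjI ballI allI impI)
    fix \<tau> \<sigma> assume t: "\<tau> \<in> ?T" and s: "\<sigma> \<in> ?T"
    have "(\<Sum>\<nu> \<in> ?T. of_nat (arr_count \<tau> \<nu>) * g \<nu> \<sigma>) = (\<Sum>\<nu> \<in> ?T. of_nat (arr_count \<tau> \<nu>) * X \<sigma> \<nu>)"
      using s by (intro sum.cong refl) (simp add: g_def)
    moreover have "(\<Sum>\<nu> \<in> ?T. of_nat (arr_count \<tau> \<nu>) * X \<sigma> \<nu>) = (if \<tau> = \<sigma> then 1 else 0)"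
      using X[of \<sigma>] t by blast
    ultimately show "(\<Sum>\<nu> \<in> ?T. of_nat (arr_count \<tau> \<nu>) * g \<nu> \<sigma>) = (if \<tau> = \<sigma> then 1 else 0)" by simp
  next
    fix \<tau> \<sigma> :: ptype assume "\<tau> \<notin> ?T \<or> \<sigma> \<notin> ?T"
    then show "g \<tau> \<sigma> = 0" by (auto simp: g_def)
  qed
  have uniq: "g' = g" if "?P g'" for g'
  proof (intro ext)
    fix \<tau> \<sigma>
    show "g' \<tau> \<sigma> = g \<tau> \<sigma>"
    proof (cases "\<tau> \<in> ?T \<and> \<sigma> \<in> ?T")
      case True
      have "\<forall>\<tau>\<in>?T. (\<Sum>\<nu>\<in>?T. of_nat (arr_count \<tau> \<nu>) * (g' \<nu> \<sigma> - g \<nu> \<sigma>)) = 0"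
      proof
        fix \<tau>' assume t': "\<tau>' \<in> ?T"
        have e1: "(\<Sum>\<nu>\<in>?T. of_nat (arr_count \<tau>' \<nu>) * g' \<nu> \<sigma>) = (if \<tau>' = \<sigma> then 1 else 0)"
          using that t' True by blast
        have e2: "(\<Sum>\<nu>\<in>?T. of_nat (arr_count \<tau>' \<nu>) * g \<nu> \<sigma>) = (if \<tau>' = \<sigma> then 1 else 0)"
          using Pg t' True by blast
        have "(\<Sum>\<nu>\<in>?T. of_nat (arr_count \<tau>' \<nu>) * (g' \<nu> \<sigma> - g \<nu> \<sigma>))
            = (\<Sum>\<nu>\<in>?T. of_nat (arr_count \<tau>' \<nu>) * g' \<nu> \<sigma>) - (\<Sum>\<nu>\<in>?T. of_nat (arr_count \<tau>' \<nu>) * g \<nu> \<sigma>)"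
          by (simp only: right_diff_distrib sum_subtractf)
        then show "(\<Sum>\<nu>\<in>?T. of_nat (arr_count \<tau>' \<nu>) * (g' \<nu> \<sigma> - g \<nu> \<sigma>)) = 0"
          using e1 e2 by simp
      qed
      then have "\<forall>\<tau>\<in>?T. g' \<tau> \<sigma> - g \<tau> \<sigma> = 0" by (rule inj)
      then show ?thesis using True by simp
    next
      case False
      have "g' \<tau> \<sigma> = 0" using that False by blast
      moreover have "g \<tau> \<sigma> = 0" unfolding g_def by (rule if_not_P[OF False])
      ultimately show ?thesis by simp
    qed
  qed
  have "?P (arr_inv d)"
  proof -
    have "\<exists>!g. ?P g"
      apply (rule ex1I[where a=g])
       apply (rule Pg)
      apply (erule uniq)
      done
    then show ?thesis unfolding arr_inv_def by (rule theI')
  qed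
  then have col: "\<forall>\<tau>\<in>?T. (\<Sum>\<nu>\<in>?T. of_nat (arr_count \<tau> \<nu>) * arr_inv d \<nu> \<sigma>0) = (if \<tau> = \<sigma>0 then 1 else 0)"
    using \<sigma>0 by blast
  have "\<forall>\<tau>\<in>?T. (\<Sum>\<nu>\<in>?T. of_nat (arr_count \<tau> \<nu>) * (arr_inv d \<nu> \<sigma>0 - y \<nu>)) = 0"
  proof
    fix \<tau>' assume t': "\<tau>' \<in> ?T"
    have e1: "(\<Sum>\<nu>\<in>?T. of_nat (arr_count \<tau>' \<nu>) * arr_inv d \<nu> \<sigma>0) = (if \<tau>' = \<sigma>0 then 1 else 0)"
      using col t' by blast
    have e2: "(\<Sum>\<nu>\<in>?T. of_nat (arr_count \<tau>' \<nu>) * y \<nu>) = (if \<tau>' = \<sigma>0 then 1 else 0)"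
      using y t' by blast
    have "(\<Sum>\<nu>\<in>?T. of_nat (arr_count \<tau>' \<nu>) * (arr_inv d \<nu> \<sigma>0 - y \<nu>))
        = (\<Sum>\<nu>\<in>?T. of_nat (arr_count \<tau>' \<nu>) * arr_inv d \<nu> \<sigma>0) - (\<Sum>\<nu>\<in>?T. of_nat (arr_count \<tau>' \<nu>) * y \<nu>)"
      by (simp only: right_diff_distrib sum_subtractf)
    then show "(\<Sum>\<nu>\<in>?T. of_nat (arr_count \<tau>' \<nu>) * (arr_inv d \<nu> \<sigma>0 - y \<nu>)) = 0"
      using e1 e2 by simp
  qed
  then have "\<forall>\<tau>\<in>?T. arr_inv d \<tau> \<sigma>0 - y \<tau> = 0" by (rule inj)
  then show ?thesis using \<tau> by simp
qed


lemma sum_one_unique: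
  fixes f :: "'a \<Rightarrow> nat"
  assumes fS: "finite S" and s1: "(\<Sum>x\<in>S. f x) = 1" and a: "a \<in> S" and fa: "f a \<noteq> 0"
  shows "f a = 1 \<and> (\<forall>x\<in>S - {a}. f x = 0)"
proof -
  have "f a + (\<Sum>x\<in>S - {a}. f x) = 1" using s1 sum.remove[OF fS a, of f] by simp
  then have "f a = 1" "(\<Sum>x\<in>S - {a}. f x) = 0" using fa by linarith+
  then show ?thesis using fS by simp
qed

lemma finite_arrL:
  assumes pos: "\<forall>i<length ts. 0 < fst (ts ! i)"
  shows "finite (arrL ts ls)"
proof -
  let ?r = "length ts" and ?s = "length ls"
  let ?B = "\<Sum>j<?s. fst (ls ! j)"
  let ?R = "{w. \<forall>x. (x \<in> {..<?s} \<longrightarrow> w x \<in> {0..?B}) \<and> (x \<notin> {..<?s} \<longrightarrow> (w x::nat) = 0)}"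
  have fR: "finite ?R" by (rule finite_set_of_finite_funs) auto
  have "arrL ts ls \<subseteq> {A. \<forall>x. (x \<in> {..<?r} \<longrightarrow> A x \<in> ?R) \<and> (x \<notin> {..<?r} \<longrightarrow> A x = (\<lambda>_. 0))}"
  proof
    fix A assume A: "A \<in> arrL ts ls"
    have "\<forall>x. (x \<in> {..<?r} \<longrightarrow> A x \<in> ?R) \<and> (x \<notin> {..<?r} \<longrightarrow> A x = (\<lambda>_. 0))"
    proof (intro allI conjI impI)
      fix x assume x: "x \<in> {..<?r}"
      have "\<forall>y. (y \<in> {..<?s} \<longrightarrow> A x y \<in> {0..?B}) \<and> (y \<notin> {..<?s} \<longrightarrow> A x y = 0)"
      proof (intro allI conjI impI)
        fix y assume y: "y \<in> {..<?s}"
        have "A x y \<le> A x y * fst (ts ! x)" using pos x by (simp add: Suc_le_eq)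
        also have "\<dots> \<le> (\<Sum>i<?r. A i y * fst (ts ! i))" using x by (intro member_le_sum) auto
        also have "\<dots> = fst (ls ! y)" using A y by (auto simp: arrL_def)
        also have "\<dots> \<le> ?B" using y by (intro member_le_sum) auto
        finally show "A x y \<in> {0..?B}" by simp
      next
        fix y assume "y \<notin> {..<?s}" then show "A x y = 0" using A by (auto simp: arrL_def)
      qed
      then show "A x \<in> ?R" by blast
    next
      fix x assume "x \<notin> {..<?r}" then show "A x = (\<lambda>_. 0)" using A by (auto simp: arrL_def)
    qed
    then show "A \<in> {A. \<forall>x. (x \<in> {..<?r} \<longrightarrow> A x \<in> ?R) \<and> (x \<notin> {..<?r} \<longrightarrow> A x = (\<lambda>_. 0))}" by blast
  qed
  moreover have "finite {A. \<forall>x. (x \<in> {..<?r} \<longrightarrow> A x \<in> ?R) \<and> (x \<notin> {..<?r} \<longrightarrow> A x = (\<lambda>_. 0))}"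
    by (rule finite_set_of_finite_funs) (use fR in auto)
  ultimately show ?thesis by (rule finite_subset)
qed

lemma type_list_pos:
  assumes "\<tau> \<in> types_of_degree d"
  shows "\<forall>i<length (sorted_list_of_multiset \<tau>). 0 < fst (sorted_list_of_multiset \<tau> ! i) \<and> 0 < snd (sorted_list_of_multiset \<tau> ! i)"
proof (intro allI impI)
  fix i assume "i < length (sorted_list_of_multiset \<tau>)"
  then have "sorted_list_of_multiset \<tau> ! i \<in># \<tau>"
    by (metis mset_sorted_list_of_multiset nth_mem set_mset_mset)
  then show "0 < fst (sorted_list_of_multiset \<tau> ! i) \<and> 0 < snd (sorted_list_of_multiset \<tau> ! i)"
    using assms by (simp add: types_of_degree_def is_type_def)
qed

lemma arr_diag:
  assumes t: "\<tau> \<in> types_of_degree d"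
  shows "arr_count \<tau> \<tau> \<noteq> 0"
proof -
  let ?ts = "sorted_list_of_multiset \<tau>"
  let ?r = "length ?ts"
  define I where "I = (\<lambda>i j. if i = j \<and> i < ?r then 1 else (0::nat))"
  have "I \<in> arrL ?ts ?ts"
    unfolding arrL_def
  proof (intro CollectI conjI allI impI)
    fix i j assume "?r \<le> i \<or> ?r \<le> j" then show "I i j = 0" by (auto simp: I_def)
  next
    fix i assume i: "i < ?r"
    have "(\<Sum>j<?r. I i j * snd (?ts ! j)) = (\<Sum>j<?r. if j = i then snd (?ts ! i) else 0)"
      by (rule sum.cong) (auto simp: I_def)
    then show "(\<Sum>j<?r. I i j * snd (?ts ! j)) = snd (?ts ! i)" using i by simp
  next
    fix j assume j: "j < ?r"
    have "(\<Sum>i<?r. I i j * fst (?ts ! i)) = (\<Sum>i<?r. if i = j then fst (?ts ! j) else 0)"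
      by (rule sum.cong) (auto simp: I_def)
    then show "(\<Sum>i<?r. I i j * fst (?ts ! i)) = fst (?ts ! j)" using j by simp
  qed
  moreover have "finite (arrL ?ts ?ts)" using type_list_pos[OF t] by (intro finite_arrL) auto
  ultimately show ?thesis by (auto simp: arr_count_def arrangements_arrL)
qed

definition tkey :: "ptype \<Rightarrow> int \<times> int" where
  "tkey \<tau> = (int (\<Sum>p\<in>#\<tau>. snd p), - int (size \<tau>))"

lemma key_lt1: "(a::nat) < b \<Longrightarrow> (int a, x) < (int b, (y::int))"
  by (simp add: less_prod_def)

lemma key_lt2: "(a::nat) = b \<Longrightarrow> (r::nat) < s \<Longrightarrow> (int a, - int s) < (int b, - int r)"
  by (simp add: less_prod_def)

lemma arr_tri:
  assumes t: "\<tau> \<in> types_of_degree d" and v: "\<nu> \<in> types_of_degree d"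
    and a: "arr_count \<tau> \<nu> \<noteq> 0" and ne: "\<nu> \<noteq> \<tau>"
  shows "tkey \<nu> < tkey \<tau>"
proof -
  define ts where "ts = sorted_list_of_multiset \<tau>"
  define ls where "ls = sorted_list_of_multiset \<nu>"
  define r where "r = length ts"
  define s where "s = length ls"
  have pt: "\<forall>i<r. 0 < fst (ts ! i) \<and> 0 < snd (ts ! i)" using type_list_pos[OF t] by (simp add: ts_def r_def)
  have pl: "\<forall>j<s. 0 < fst (ls ! j) \<and> 0 < snd (ls ! j)" using type_list_pos[OF v] by (simp add: ls_def s_def)
  have "arrL ts ls \<noteq> {}"
  proof
    assume "arrL ts ls = {}"
    then have "arr_count \<tau> \<nu> = 0" by (simp add: arr_count_def arrangements_arrL ts_def ls_def)
    then show False using a by simp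
  qed
  then obtain A where A: "A \<in> arrL ts ls" by blast
  have Z: "\<And>i j. i \<ge> r \<or> j \<ge> s \<Longrightarrow> A i j = 0" using A by (auto simp: arrL_def r_def s_def)
  have R: "\<And>i. i < r \<Longrightarrow> (\<Sum>j<s. A i j * snd (ls ! j)) = snd (ts ! i)" using A by (auto simp: arrL_def r_def s_def)
  have C: "\<And>j. j < s \<Longrightarrow> (\<Sum>i<r. A i j * fst (ts ! i)) = fst (ls ! j)" using A by (auto simp: arrL_def r_def s_def)
  have cs1: "1 \<le> (\<Sum>i<r. A i j)" if j: "j < s" for j
  proof (rule ccontr)
    assume "\<not> 1 \<le> (\<Sum>i<r. A i j)"
    then have "(\<Sum>i<r. A i j) = 0" by linarith
    then have "\<forall>i<r. A i j = 0" by (simp add: sum_eq_0_iff)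
    then have "(\<Sum>i<r. A i j * fst (ts ! i)) = 0" by simp
    then have "fst (ls ! j) = 0" using C[OF j] by linarith
    then show False using pl j by auto
  qed
  have rs1: "1 \<le> (\<Sum>j<s. A i j)" if i: "i < r" for i
  proof (rule ccontr)
    assume "\<not> 1 \<le> (\<Sum>j<s. A i j)"
    then have "(\<Sum>j<s. A i j) = 0" by linarith
    then have "\<forall>j<s. A i j = 0" by (simp add: sum_eq_0_iff)
    then have "(\<Sum>j<s. A i j * snd (ls ! j)) = 0" by simp
    then have "snd (ts ! i) = 0" using R[OF i] by linarith
    then show False using pt i by auto
  qed
  have Stau: "(\<Sum>p\<in>#\<tau>. snd p) = (\<Sum>j<s. snd (ls ! j) * (\<Sum>i<r. A i j))"
  proof -
    have "(\<Sum>p\<in>#\<tau>. snd p) = (\<Sum>i<r. snd (ts ! i))"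
      using sum_mset_list_nth[of snd ts] by (simp add: ts_def r_def)
    also have "\<dots> = (\<Sum>i<r. \<Sum>j<s. A i j * snd (ls ! j))" using R by simp
    also have "\<dots> = (\<Sum>j<s. \<Sum>i<r. A i j * snd (ls ! j))" by (rule sum.swap)
    also have "\<dots> = (\<Sum>j<s. snd (ls ! j) * (\<Sum>i<r. A i j))" by (simp add: sum_distrib_left mult.commute)
    finally show ?thesis .
  qed
  have Snu: "(\<Sum>p\<in>#\<nu>. snd p) = (\<Sum>j<s. snd (ls ! j))"
    using sum_mset_list_nth[of snd ls] by (simp add: ls_def s_def)
  have st: "size \<tau> = r" by (simp add: r_def ts_def flip: size_mset)
  have sv: "size \<nu> = s" by (simp add: s_def ls_def flip: size_mset)
  have le1: "(\<Sum>j<s. snd (ls ! j)) \<le> (\<Sum>j<s. snd (ls ! j) * (\<Sum>i<r. A i j))"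
    using cs1 by (intro sum_mono) simp
  show ?thesis
  proof (cases "(\<Sum>j<s. snd (ls ! j)) < (\<Sum>j<s. snd (ls ! j) * (\<Sum>i<r. A i j))")
    case True
    show ?thesis unfolding tkey_def by (rule key_lt1) (use True Stau Snu in simp)
  next
    case False
    then have eqS: "(\<Sum>j<s. snd (ls ! j)) = (\<Sum>j<s. snd (ls ! j) * (\<Sum>i<r. A i j))" using le1 by simp
    have c1: "(\<Sum>i<r. A i j) = 1" if j: "j < s" for j
    proof (rule ccontr)
      assume "(\<Sum>i<r. A i j) \<noteq> 1"
      then have "1 < (\<Sum>i<r. A i j)" using cs1[OF j] by simp
      then have "snd (ls ! j) < snd (ls ! j) * (\<Sum>i<r. A i j)" using pl j by simp
      then have "(\<Sum>j<s. snd (ls ! j)) < (\<Sum>j<s. snd (ls ! j) * (\<Sum>i<r. A i j))"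
        using cs1 j by (intro sum_strict_mono_ex1) (auto intro!: bexI[of _ j])
      then show False using eqS by simp
    qed
    have sdef: "s = (\<Sum>i<r. \<Sum>j<s. A i j)"
    proof -
      have "(\<Sum>i<r. \<Sum>j<s. A i j) = (\<Sum>j<s. \<Sum>i<r. A i j)" by (rule sum.swap)
      also have "\<dots> = (\<Sum>j<s. 1)" using c1 by simp
      finally show ?thesis by simp
    qed
    have rle: "r \<le> s"
    proof -
      have "(\<Sum>i<r. 1) \<le> (\<Sum>i<r. \<Sum>j<s. A i j)" using rs1 by (intro sum_mono) simp
      then show ?thesis using sdef by simp
    qed
    show ?thesis
    proof (cases "r < s")
      case True
      show ?thesis unfolding tkey_def st sv by (rule key_lt2) (use True Stau Snu eqS in simp_all)
    next
      case False
      then have rs: "r = s" using rle by simp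
      have r1: "(\<Sum>j<s. A i j) = 1" if i: "i < r" for i
      proof (rule ccontr)
        assume "(\<Sum>j<s. A i j) \<noteq> 1"
        then have "1 < (\<Sum>j<s. A i j)" using rs1[OF i] by simp
        then have "(\<Sum>i<r. 1) < (\<Sum>i<r. \<Sum>j<s. A i j)"
          using rs1 i by (intro sum_strict_mono_ex1) (auto intro!: bexI[of _ i])
        then show False using sdef rs by simp
      qed
      define \<sigma> where "\<sigma> i = (SOME j. j < s \<and> A i j \<noteq> 0)" for i
      have \<sigma>: "\<sigma> i < s \<and> A i (\<sigma> i) \<noteq> 0" if i: "i < r" for i
      proof -
        have "\<exists>j. j < s \<and> A i j \<noteq> 0"
        proof (rule ccontr)
          assume "\<not> (\<exists>j. j < s \<and> A i j \<noteq> 0)"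
          then have "(\<Sum>j<s. A i j) = 0" by (intro sum.neutral) auto
          then show False using r1[OF i] by simp
        qed
        then show ?thesis unfolding \<sigma>_def by (rule someI_ex)
      qed
      have rowu: "A i (\<sigma> i) = 1 \<and> (\<forall>j\<in>{..<s} - {\<sigma> i}. A i j = 0)" if i: "i < r" for i
        using sum_one_unique[of "{..<s}" "A i" "\<sigma> i"] r1[OF i] \<sigma>[OF i] by simp
      have colu: "\<forall>i'\<in>{..<r} - {i}. A i' (\<sigma> i) = 0" if i: "i < r" for i
        using sum_one_unique[of "{..<r}" "\<lambda>i'. A i' (\<sigma> i)" i] c1[of "\<sigma> i"] \<sigma>[OF i] i by simp
      have eq: "ts ! i = ls ! (\<sigma> i)" if i: "i < r" for i
      proof -
        have "snd (ts ! i) = (\<Sum>j<s. A i j * snd (ls ! j))" using R[OF i] by simp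
        also have "\<dots> = A i (\<sigma> i) * snd (ls ! (\<sigma> i)) + (\<Sum>j\<in>{..<s} - {\<sigma> i}. A i j * snd (ls ! j))"
          using \<sigma>[OF i] by (subst sum.remove[of _ "\<sigma> i"]) auto
        also have "\<dots> = snd (ls ! (\<sigma> i))" using rowu[OF i] by simp
        finally have e1: "snd (ts ! i) = snd (ls ! (\<sigma> i))" .
        have "fst (ls ! (\<sigma> i)) = (\<Sum>i'<r. A i' (\<sigma> i) * fst (ts ! i'))" using C \<sigma>[OF i] by simp
        also have "\<dots> = A i (\<sigma> i) * fst (ts ! i) + (\<Sum>i'\<in>{..<r} - {i}. A i' (\<sigma> i) * fst (ts ! i'))"
          using i by (subst sum.remove[of _ i]) auto
        also have "\<dots> = fst (ts ! i)" using rowu[OF i] colu[OF i] by simp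
        finally show ?thesis using e1 by (simp add: prod_eq_iff)
      qed
      have inj: "inj_on \<sigma> {..<r}"
      proof (rule inj_onI)
        fix i i' assume i: "i \<in> {..<r}" and i': "i' \<in> {..<r}" and e: "\<sigma> i = \<sigma> i'"
        show "i = i'"
        proof (rule ccontr)
          assume "i \<noteq> i'"
          then have "A i' (\<sigma> i) = 0" using colu[of i] i i' by simp
          then show False using \<sigma>[of i'] i' e by simp
        qed
      qed
      have img: "\<sigma> ` {..<r} = {..<s}"
      proof (rule card_subset_eq)
        show "\<sigma> ` {..<r} \<subseteq> {..<s}" using \<sigma> by auto
        show "card (\<sigma> ` {..<r}) = card {..<s}" using inj rs by (simp add: card_image)
      qed simp
      have "mset ts = image_mset (\<lambda>i. ts ! i) (mset_set {..<r})"
        by (metis map_nth mset_map mset_upt atLeast0LessThan r_def)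
      also have "\<dots> = image_mset (\<lambda>i. ls ! (\<sigma> i)) (mset_set {..<r})"
        by (rule image_mset_cong) (simp add: eq)
      also have "\<dots> = image_mset (\<lambda>j. ls ! j) (image_mset \<sigma> (mset_set {..<r}))"
        by (simp add: multiset.map_comp o_def)
      also have "\<dots> = image_mset (\<lambda>j. ls ! j) (mset_set {..<s})"
        by (simp add: image_mset_mset_set[OF inj] img)
      also have "\<dots> = mset ls"
        by (metis map_nth mset_map mset_upt atLeast0LessThan s_def)
      finally have "\<tau> = \<nu>" by (simp add: ts_def ls_def)
      then show ?thesis using ne by simp
    qed
  qed
qed


theorem theorem4:
  fixes d :: nat and \<tau> :: ptype
  assumes "d \<ge> 1" and "is_type d \<tau>"
  shows "(is_mixed \<tau> \<longrightarrow> arr_inv d \<tau> {#(d, 1)#} = 0) \<and>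
         (\<forall>m. is_pure m \<tau> \<longrightarrow>
            arr_inv d \<tau> {#(d, 1)#} =
              (of_int (mobius_mu m) / of_nat m) *
              ((-1) ^ (size \<tau> - 1) / of_nat (size \<tau>)) *
              (of_nat (fact (size \<tau>)) /
               of_nat (\<Prod>b \<in> {1..d div m}. fact (count \<tau> (b, m)))))"
proof -
  have d: "1 \<le> d" using assms(1) .
  have tT: "\<tau> \<in> types_of_degree d" using assms(2) by (simp add: types_of_degree_def)
  have s0: "{#(d, 1)#} \<in> types_of_degree d" using d by (simp add: types_of_degree_def is_type_def)
  have y: "\<forall>\<tau>'\<in>types_of_degree d. (\<Sum>\<nu>\<in>types_of_degree d. of_nat (arr_count \<tau>' \<nu>) * fcol d \<nu>) = (if \<tau>' = {#(d, 1)#} then 1 else 0)"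
    using main_sum[OF d] by blast
  have inv: "arr_inv d \<tau> {#(d, 1)#} = fcol d \<tau>"
    by (rule arr_tri_inverse[where key=tkey, OF arr_tri arr_diag s0 y tT])
  have ne: "\<tau> \<noteq> {#}" using assms d by (auto simp: is_type_def)
  then obtain p where p: "p \<in># \<tau>" by blast
  show ?thesis
  proof (intro conjI allI impI)
    assume "is_mixed \<tau>"
    then have "\<And>n. \<not> is_pure n \<tau>" by (simp add: is_mixed_def)
    then show "arr_inv d \<tau> {#(d, 1)#} = 0" unfolding inv fcol_def by simp
  next
    fix m assume pm: "is_pure m \<tau>"
    have uq: "n = m" if "is_pure n \<tau>" for n
    proof -
      have "snd p = n" using that p unfolding is_pure_def by blast
      moreover have "snd p = m" using pm p unfolding is_pure_def by blast
      ultimately show ?thesis by simp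
    qed
    have sm: "snd p = m" using pm p by (simp add: is_pure_def)
    have m0: "0 < m" "0 < fst p" using assms(2) p sm by (auto simp: is_type_def)
    have "fst p * snd p \<le> d" by (rule type_elem_le[OF assms(2) p])
    moreover have "m \<le> fst p * m" using m0 by simp
    ultimately have md: "m \<le> d" using sm by (metis order_trans)
    have "fcol d \<tau> = (\<Sum>n\<in>{1..d}. if n = m then Fc d m \<tau> else 0)"
      unfolding fcol_def
    proof (rule sum.cong[OF refl])
      fix n assume "n \<in> {1..d}"
      show "(if is_pure n \<tau> then Fc d n \<tau> else 0) = (if n = m then Fc d m \<tau> else 0)"
      proof (cases "is_pure n \<tau>")
        case True
        then have "n = m" by (rule uq)
        then show ?thesis using True by simp
      next
        case False
        then have "n \<noteq> m" using pm by auto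
        then show ?thesis using False by simp
      qed
    qed
    also have "\<dots> = Fc d m \<tau>" using m0 md by simp
    finally show "arr_inv d \<tau> {#(d, 1)#} =
              (of_int (mobius_mu m) / of_nat m) *
              ((-1) ^ (size \<tau> - 1) / of_nat (size \<tau>)) *
              (of_nat (fact (size \<tau>)) /
               of_nat (\<Prod>b \<in> {1..d div m}. fact (count \<tau> (b, m))))"
      unfolding inv Fc_def by simp
  qed
qed


end
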